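(* For every finite pure-state ensemble $\mathcal{E}$ and $\epsilon$, the function $R\mapsto M_\epsilon(\mathcal{E},R)$ is monotonically nonincreasing. Moreover, $M_\epsilon(\mathcal{E},R)$ is jointly convex in $(\epsilon,R)$ in the following sense. For any finitely many $\epsilon_k>0$, $R_k\ge 0$ and probabilities $\lambda_k\ge 0$ with $\sum_k\lambda_k=1$, setting $\epsilon=\sum_k\lambda_k\epsilon_k$ and $R=\sum_k\lambda_kR_k$, we have $M_\epsilon(\mathcal{E},R)\le\sum_k\lambda_kM_{\epsilon_k}(\mathcal{E},R_k)$.
   Context: Let $\mathcal{E}=\{|\varphi_x\rangle,r_x\}_{x\in\mathcal X}$ be a finite ensemble of pure states on a finite-dimensional Hilbert space $\mathcal H$. An encoding map $E$ assigns to each $x$ a state $E(x)=\sum_jp(j|x)\,\omega_{x,j}\otimes|j\rangle\langle j|$ on $\mathcal H_B\otimes\mathcal H_C$. Here $\mathcal H_B,\mathcal H_C$ are finite-dimensional and $\{|j\rangle\}$ is an orthonormal basis of $\mathcal H_C$. With $\rho^{ABC}=\sum_xr_x|x\rangle\langle x|^A\otimes E(x)$, define $S(A:C)=S(A)+S(C)-S(AC)$ and $S(A:B|C)=S(AC)+S(BC)-S(ABC)-S(C)$, where $S$ is von Neumann entropy (base 2) of reduced states. $T_\epsilon(\mathcal{E},R)$ is the set of encoding maps $E$ with $S(A:C)\le R$ for which there exists a CPTP map $D$ from operators on $\mathcal H_B\otimes\mathcal H_C$ to operators on $\mathcal H$ with $\sum_xr_x\langle\varphi_x|D(E(x))|\varphi_x\rangle\ge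 1-\epsilon$. $M_\epsilon(\mathcal{E},R)=\inf\{S(A:B|C):E\in T_\epsilon(\mathcal{E},R)\}$. *)

theory Defs
  imports "Jordan_Normal_Form.Char_Poly" "HOL-Library.Extended_Real"
begin

definition mtrace :: "complex mat \<Rightarrow> complex" where
  "mtrace A = (\<Sum>i<dim_row A. A $$ (i, i))"

definition qform :: "complex mat \<Rightarrow> complex vec \<Rightarrow> complex" where
  "qform A v = (\<Sum>i<dim_vec v. \<Sum>j<dim_vec v. cnj (v $ i) * A $$ (i, j) * v $ j)"

definition psd :: "complex mat \<Rightarrow> bool" where
  "psd A \<longleftrightarrow> dim_col A = dim_row A \<and>
     (\<forall>v \<in> carrier_vec (dim_row A). Im (qform A v) = 0 \<and> Re (qform A v) \<ge> 0)"

definition density :: "nat \<Rightarrow> complex mat \<Rightarrow> bool" where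
  "density n \<rho> \<longleftrightarrow> \<rho> \<in> carrier_mat n n \<and> psd \<rho> \<and> mtrace \<rho> = 1"

definition kron :: "complex mat \<Rightarrow> complex mat \<Rightarrow> complex mat" where
  "kron A B = mat (dim_row A * dim_row B) (dim_col A * dim_col B)
     (\<lambda>(i, j). A $$ (i div dim_row B, j div dim_col B) * B $$ (i mod dim_row B, j mod dim_col B))"

definition proj :: "nat \<Rightarrow> nat \<Rightarrow> complex mat" where
  "proj n j = mat n n (\<lambda>(a, b). if a = j \<and> b = j then 1 else 0)"

definition msum :: "nat \<Rightarrow> nat \<Rightarrow> ('i \<Rightarrow> complex mat) \<Rightarrow> 'i set \<Rightarrow> complex mat" where
  "msum n m f I = mat n m (\<lambda>ij. \<Sum>k\<in>I. f k $$ ij)"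

definition ptrace2 :: "nat \<Rightarrow> nat \<Rightarrow> complex mat \<Rightarrow> complex mat" where
  "ptrace2 a b \<rho> = mat a a (\<lambda>(i, j). \<Sum>k<b. \<rho> $$ (i * b + k, j * b + k))"

definition ptrace1 :: "nat \<Rightarrow> nat \<Rightarrow> complex mat \<Rightarrow> complex mat" where
  "ptrace1 a b \<rho> = mat b b (\<lambda>(i, j). \<Sum>k<a. \<rho> $$ (k * b + i, k * b + j))"

definition ptrace_mid :: "nat \<Rightarrow> nat \<Rightarrow> nat \<Rightarrow> complex mat \<Rightarrow> complex mat" where
  "ptrace_mid a b c \<rho> = mat (a * c) (a * c) (\<lambda>(i, j).
     \<Sum>k<b. \<rho> $$ ((i div c) * (b * c) + k * c + i mod c, (j div c) * (b * c) + k * c + j mod c))"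

definition eta :: "real \<Rightarrow> real" where
  "eta t = (if t > 0 then t * log 2 t else 0)"

text \<open>S(rho) = - sum over eigenvalues (with algebraic multiplicity, i.e. roots of the
  characteristic polynomial) of lambda log2 lambda\<close>
definition vn_entropy :: "complex mat \<Rightarrow> real" where
  "vn_entropy \<rho> = - (\<Sum>z\<in>{z. poly (char_poly \<rho>) z = 0}.
      real (order z (char_poly \<rho>)) * eta (Re z))"

text \<open>(id_k (x) D) applied to a (k*n) x (k*n) matrix, block-wise\<close>
definition ampliate :: "nat \<Rightarrow> nat \<Rightarrow> nat \<Rightarrow> (complex mat \<Rightarrow> complex mat) \<Rightarrow> complex mat \<Rightarrow> complex mat" where
  "ampliate k n m D X = mat (k * m) (k * m) (\<lambda>(i, j).
     D (mat n n (\<lambda>(p, q). X $$ ((i div m) * n + p, (j div m) * n + q))) $$ (i mod m, j mod m))"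

definition cptp :: "nat \<Rightarrow> nat \<Rightarrow> (complex mat \<Rightarrow> complex mat) \<Rightarrow> bool" where
  "cptp n m D \<longleftrightarrow>
     (\<forall>A \<in> carrier_mat n n. D A \<in> carrier_mat m m) \<and>
     (\<forall>A \<in> carrier_mat n n. \<forall>B \<in> carrier_mat n n. D (A + B) = D A + D B) \<and>
     (\<forall>A \<in> carrier_mat n n. \<forall>c. D (c \<cdot>\<^sub>m A) = c \<cdot>\<^sub>m D A) \<and>
     (\<forall>A \<in> carrier_mat n n. mtrace (D A) = mtrace A) \<and>
     (\<forall>k. \<forall>X \<in> carrier_mat (k * n) (k * n). psd X \<longrightarrow> psd (ampliate k n m D X))"

definition ensemble :: "nat \<Rightarrow> nat \<Rightarrow> (nat \<Rightarrow> real) \<Rightarrow> (nat \<Rightarrow> complex vec) \<Rightarrow> bool" where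
  "ensemble d n r \<phi> \<longleftrightarrow>
     (\<forall>x<n. r x \<ge> 0 \<and> \<phi> x \<in> carrier_vec d \<and> (\<Sum>i<d. (cmod (\<phi> x $ i))\<^sup>2) = 1) \<and>
     (\<Sum>x<n. r x) = 1"

text \<open>An encoding: H_B = C^dB, H_C = C^dC, conditional distribution p x j (j < dC),
  states omega x j on H_B.\<close>
record encoding =
  dimB :: nat
  dimC :: nat
  pcond :: "nat \<Rightarrow> nat \<Rightarrow> real"
  omega :: "nat \<Rightarrow> nat \<Rightarrow> complex mat"

definition valid_encoding :: "nat \<Rightarrow> encoding \<Rightarrow> bool" where
  "valid_encoding n e \<longleftrightarrow>
     (\<forall>x<n. (\<forall>j<dimC e. pcond e x j \<ge> 0 \<and> density (dimB e) (omega e x j)) \<and>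
            (\<Sum>j<dimC e. pcond e x j) = 1)"

definition enc_state :: "encoding \<Rightarrow> nat \<Rightarrow> complex mat" where
  "enc_state e x = msum (dimB e * dimC e) (dimB e * dimC e)
     (\<lambda>j. complex_of_real (pcond e x j) \<cdot>\<^sub>m kron (omega e x j) (proj (dimC e) j)) {..<dimC e}"

definition rhoABC :: "nat \<Rightarrow> (nat \<Rightarrow> real) \<Rightarrow> encoding \<Rightarrow> complex mat" where
  "rhoABC n r e = msum (n * (dimB e * dimC e)) (n * (dimB e * dimC e))
     (\<lambda>x. complex_of_real (r x) \<cdot>\<^sub>m kron (proj n x) (enc_state e x)) {..<n}"

definition S_A :: "nat \<Rightarrow> (nat \<Rightarrow> real) \<Rightarrow> encoding \<Rightarrow> real" where
  "S_A n r e = vn_entropy (ptrace2 n (dimB e * dimC e) (rhoABC n r e))"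
definition S_C :: "nat \<Rightarrow> (nat \<Rightarrow> real) \<Rightarrow> encoding \<Rightarrow> real" where
  "S_C n r e = vn_entropy (ptrace1 (n * dimB e) (dimC e) (rhoABC n r e))"
definition S_AC :: "nat \<Rightarrow> (nat \<Rightarrow> real) \<Rightarrow> encoding \<Rightarrow> real" where
  "S_AC n r e = vn_entropy (ptrace_mid n (dimB e) (dimC e) (rhoABC n r e))"
definition S_BC :: "nat \<Rightarrow> (nat \<Rightarrow> real) \<Rightarrow> encoding \<Rightarrow> real" where
  "S_BC n r e = vn_entropy (ptrace1 n (dimB e * dimC e) (rhoABC n r e))"
definition S_ABC :: "nat \<Rightarrow> (nat \<Rightarrow> real) \<Rightarrow> encoding \<Rightarrow> real" where
  "S_ABC n r e = vn_entropy (rhoABC n r e)"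

definition mutual_AC :: "nat \<Rightarrow> (nat \<Rightarrow> real) \<Rightarrow> encoding \<Rightarrow> real" where
  "mutual_AC n r e = S_A n r e + S_C n r e - S_AC n r e"

definition cmi_AB_C :: "nat \<Rightarrow> (nat \<Rightarrow> real) \<Rightarrow> encoding \<Rightarrow> real" where
  "cmi_AB_C n r e = S_AC n r e + S_BC n r e - S_ABC n r e - S_C n r e"

definition T_eps :: "nat \<Rightarrow> nat \<Rightarrow> (nat \<Rightarrow> real) \<Rightarrow> (nat \<Rightarrow> complex vec) \<Rightarrow> real \<Rightarrow> real \<Rightarrow> encoding set" where
  "T_eps d n r \<phi> \<epsilon> R = {e. valid_encoding n e \<and> mutual_AC n r e \<le> R \<and>
     (\<exists>D. cptp (dimB e * dimC e) d D \<and>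
          (\<Sum>x<n. r x * Re (qform (D (enc_state e x)) (\<phi> x))) \<ge> 1 - \<epsilon>)}"

text \<open>M_eps(E,R) = inf of S(A:B|C) over T_eps(E,R) (infimum of the empty set is +infinity)\<close>
definition M_eps :: "nat \<Rightarrow> nat \<Rightarrow> (nat \<Rightarrow> real) \<Rightarrow> (nat \<Rightarrow> complex vec) \<Rightarrow> real \<Rightarrow> real \<Rightarrow> ereal" where
  "M_eps d n r \<phi> \<epsilon> R = (INF e \<in> T_eps d n r \<phi> \<epsilon> R. ereal (cmi_AB_C n r e))"

end

theory Submission
  imports Defs "Jordan_Normal_Form.Schur_Decomposition"
begin

definition ent_poly :: "complex poly \<Rightarrow> real" where
 "ent_poly p = - (\<Sum>z\<in>{z. poly p z = 0}. real (Polynomial.order z p) * eta (Re z))"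

lemma vn_ent: "vn_entropy A = ent_poly (char_poly A)"
  by (simp add: vn_entropy_def ent_poly_def)

lemma ent_poly_mult: assumes "p \<noteq> 0" "q \<noteq> 0"
  shows "ent_poly (p*q) = ent_poly p + ent_poly q"
proof -
  let ?f = "\<lambda>p z. real (Polynomial.order z p) * eta (Re z)"
  let ?Z = "\<lambda>p. {z. poly p z = 0}"
  have fin: "finite (?Z p)" "finite (?Z q)" using assms poly_roots_finite by auto
  have U: "?Z (p*q) = ?Z p \<union> ?Z q" by auto
  have pq: "p*q \<noteq> 0" using assms by simp
  have s1: "(\<Sum>z\<in>?Z p \<union> ?Z q. ?f p z) = (\<Sum>z\<in>?Z p. ?f p z)"
    by (rule sum.mono_neutral_right) (use fin assms in \<open>auto simp: order_root\<close>)
  have s2: "(\<Sum>z\<in>?Z p \<union> ?Z q. ?f q z) = (\<Sum>z\<in>?Z q. ?f q z)"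
    by (rule sum.mono_neutral_right) (use fin assms in \<open>auto simp: order_root\<close>)
  have "(\<Sum>z\<in>?Z (p*q). ?f (p*q) z) = (\<Sum>z\<in>?Z p \<union> ?Z q. ?f p z + ?f q z)"
    unfolding U by (rule sum.cong) (auto simp: order_mult[OF pq] algebra_simps)
  then show ?thesis unfolding ent_poly_def using s1 s2 by (simp add: sum.distrib)
qed

lemma ent_poly_linear: "ent_poly [:-a, 1:] = - eta (Re a)"
proof -
  have Z: "{z. poly [:-a, 1:] z = 0} = {a}" by auto
  have "Polynomial.order a [:-a, 1:] = 1" using order_power_n_n[of a 1] by simp
  then show ?thesis unfolding ent_poly_def Z by simp
qed

lemma ent_poly_one: "ent_poly 1 = 0"
  unfolding ent_poly_def by simp

lemma prod_lin_nz: "(\<Prod>a\<leftarrow>as. [:- a, 1:]) \<noteq> (0::complex poly)"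
  by (auto simp: prod_list_zero_iff)

lemma ent_poly_prod: "ent_poly (\<Prod>a\<leftarrow>as. [:- a, 1:]) = - (\<Sum>a\<leftarrow>as. eta (Re a))"
proof (induction as)
  case Nil then show ?case by (simp add: ent_poly_one)
  case (Cons a as)
  have "ent_poly (\<Prod>a\<leftarrow>a#as. [:- a, 1:]) = ent_poly ([:-a,1:] * (\<Prod>a\<leftarrow>as. [:- a, 1:]))" by simp
  also have "\<dots> = ent_poly [:-a,1:] + ent_poly (\<Prod>a\<leftarrow>as. [:- a, 1:])"
    by (rule ent_poly_mult) (auto simp: prod_lin_nz)
  finally show ?case using Cons by (simp add: ent_poly_linear)
qed

lemma char_poly_nz: "A \<in> carrier_mat n n \<Longrightarrow> char_poly A \<noteq> 0"
  using degree_monic_char_poly[of A n] by (metis leading_coeff_0_iff zero_neq_one)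

lemma vn_upper: assumes A: "A \<in> carrier_mat n n" and ut: "upper_triangular A"
  shows "vn_entropy A = - (\<Sum>i<n. eta (Re (A $$ (i,i))))"
proof -
  have "vn_entropy A = ent_poly (\<Prod>a\<leftarrow>diag_mat A. [:- a, 1:])"
    by (simp add: vn_ent char_poly_upper_triangular[OF A ut])
  also have "\<dots> = - (\<Sum>a\<leftarrow>diag_mat A. eta (Re a))" by (rule ent_poly_prod)
  also have "(\<Sum>a\<leftarrow>diag_mat A. eta (Re a)) = (\<Sum>i<n. eta (Re (A $$ (i,i))))"
    using A by (simp add: diag_mat_def map_map o_def sum_list_map_eq_sum_count2 atLeast0LessThan[symmetric]
      flip: sum_set_upt_conv_sum_list_nat)
  finally show ?thesis .
qed

lemma vn_diag: assumes A: "A \<in> carrier_mat n n" and d: "\<And>i j. i < n \<Longrightarrow> j < n \<Longrightarrow> i \<noteq> j \<Longrightarrow> A $$ (i,j) = 0"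
  shows "vn_entropy A = - (\<Sum>i<n. eta (Re (A $$ (i,i))))"
  by (rule vn_upper[OF A]) (use A d in \<open>auto simp: upper_triangular_def\<close>)

lemma vn_block: assumes A: "A \<in> carrier_mat n n" and D: "D \<in> carrier_mat m m"
  shows "vn_entropy (four_block_mat A (0\<^sub>m n m) (0\<^sub>m m n) D) = vn_entropy A + vn_entropy D"
proof -
  have "char_poly (four_block_mat A (0\<^sub>m n m) (0\<^sub>m m n) D) = char_poly A * char_poly D"
    by (rule char_poly_0_block[OF refl _ _ A _ D]) (use char_poly_factorized[OF A] char_poly_factorized[OF D] in auto)
  then show ?thesis by (simp add: vn_ent ent_poly_mult char_poly_nz[OF A] char_poly_nz[OF D])
qed

lemma mtrace_mult_comm: assumes "A \<in> carrier_mat n m" "B \<in> carrier_mat m n"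
  shows "mtrace (A * B) = mtrace (B * A)"
proof -
  have "mtrace (A * B) = (\<Sum>i<n. \<Sum>k<m. A $$ (i,k) * B $$ (k,i))"
    using assms by (simp add: mtrace_def scalar_prod_def atLeast0LessThan)
  also have "\<dots> = (\<Sum>k<m. \<Sum>i<n. B $$ (k,i) * A $$ (i,k))"
    by (subst sum.swap) (simp add: mult.commute)
  also have "\<dots> = mtrace (B * A)"
    using assms by (simp add: mtrace_def scalar_prod_def atLeast0LessThan)
  finally show ?thesis .
qed

lemma mtrace_similar: assumes "similar_mat_wit A B P Q" "A \<in> carrier_mat n n"
  shows "mtrace A = mtrace B"
proof -
  from similar_mat_witD2[OF assms(2) assms(1)] have
    B: "B \<in> carrier_mat n n" and P: "P \<in> carrier_mat n n" and Q: "Q \<in> carrier_mat n n"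
    and QP: "Q * P = 1\<^sub>m n" and AB: "A = P * B * Q" by auto
  have "mtrace A = mtrace ((P * B) * Q)" using AB by simp
  also have "\<dots> = mtrace (Q * (P * B))" by (rule mtrace_mult_comm[of _ n n]) (use P B Q in auto)
  also have "Q * (P * B) = (Q * P) * B" using P B Q by (simp add: assoc_mult_mat)
  also have "\<dots> = B" using QP B by simp
  finally show ?thesis .
qed

lemma qform_eigen: assumes A: "A \<in> carrier_mat n n" and v: "v \<in> carrier_vec n"
  and ev: "A *\<^sub>v v = a \<cdot>\<^sub>v v"
  shows "qform A v = a * complex_of_real (\<Sum>i<n. (cmod (v $ i))\<^sup>2)"
proof -
  have "qform A v = (\<Sum>i<n. cnj (v $ i) * (A *\<^sub>v v) $ i)"
    using A v by (simp add: qform_def scalar_prod_def atLeast0LessThan sum_distrib_left mult.assoc)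
  also have "\<dots> = (\<Sum>i<n. a * (cnj (v $ i) * v $ i))" using ev v by (simp add: ac_simps)
  also have "\<dots> = a * complex_of_real (\<Sum>i<n. (cmod (v $ i))\<^sup>2)"
  proof -
    have e: "\<And>z. cnj z * z = complex_of_real ((cmod z)\<^sup>2)"
      by (simp add: complex_norm_square mult.commute del: of_real_power)
    show ?thesis by (simp add: e sum_distrib_left)
  qed
  finally show ?thesis .
qed

lemma psd_eig: assumes A: "A \<in> carrier_mat n n" and p: "psd A" and r: "poly (char_poly A) a = 0"
  shows "Re a \<ge> 0"
proof -
  from r eigenvalue_root_char_poly[OF A] have "eigenvalue A a" by simp
  then obtain v where v: "v \<in> carrier_vec n" "v \<noteq> 0\<^sub>v n" "A *\<^sub>v v = a \<cdot>\<^sub>v v"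
    using A unfolding eigenvalue_def eigenvector_def by auto
  have "\<exists>i<n. v $ i \<noteq> 0" using v(1,2) by (auto simp: vec_eq_iff)
  then obtain i where i: "i < n" "v $ i \<noteq> 0" by auto
  have pos: "(\<Sum>i<n. (cmod (v $ i))\<^sup>2) > 0"
    by (rule sum_pos2[of _ i]) (use i in auto)
  have q: "qform A v = a * complex_of_real (\<Sum>i<n. (cmod (v $ i))\<^sup>2)" by (rule qform_eigen[OF A v(1,3)])
  have "Re (qform A v) \<ge> 0" using p v(1) A unfolding psd_def by auto
  then have "Re a * (\<Sum>i<n. (cmod (v $ i))\<^sup>2) \<ge> 0" using q by simp
  then show ?thesis using pos by (simp add: zero_le_mult_iff)
qed

lemma eta_mult: assumes "s \<ge> 0" "x \<ge> 0" shows "eta (s * x) = s * eta x + x * eta s"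
proof (cases "s > 0 \<and> x > 0")
  case True then show ?thesis by (simp add: eta_def log_mult algebra_simps)
next
  case False then have "s = 0 \<or> x = 0" using assms by auto
  then show ?thesis by (auto simp: eta_def)
qed

lemma vn_scale: assumes A: "A \<in> carrier_mat n n" and p: "psd A" and s: "s \<ge> 0"
  shows "vn_entropy (complex_of_real s \<cdot>\<^sub>m A) = s * vn_entropy A - Re (mtrace A) * eta s"
proof -
  obtain as where cp: "char_poly A = (\<Prod>a\<leftarrow>as. [:- a, 1:])" using char_poly_factorized[OF A] by auto
  obtain B P Q where sd: "schur_decomposition A as = (B,P,Q)" by (cases "schur_decomposition A as") auto
  from schur_decomposition[OF A cp sd] have sim: "similar_mat_wit A B P Q"
    and ut: "upper_triangular B" and dg: "diag_mat B = as" by auto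
  from similar_mat_witD2[OF A sim] have B: "B \<in> carrier_mat n n" by auto
  have nn: "\<And>a. a \<in> set as \<Longrightarrow> Re a \<ge> 0"
    by (rule psd_eig[OF A p]) (auto simp: cp poly_prod_list_zero_iff)
  have simS: "similar_mat (complex_of_real s \<cdot>\<^sub>m A) (complex_of_real s \<cdot>\<^sub>m B)"
    using similar_mat_wit_smult[OF sim] unfolding similar_mat_def by blast
  have "vn_entropy (complex_of_real s \<cdot>\<^sub>m A) = vn_entropy (complex_of_real s \<cdot>\<^sub>m B)"
    by (simp add: vn_ent char_poly_similar[OF simS])
  also have "\<dots> = - (\<Sum>i<n. eta (Re ((complex_of_real s \<cdot>\<^sub>m B) $$ (i,i))))"
    by (rule vn_upper) (use B ut in \<open>auto simp: upper_triangular_def\<close>)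
  also have "\<dots> = - (\<Sum>i<n. s * eta (Re (B $$ (i,i))) + Re (B $$ (i,i)) * eta s)"
  proof -
    have "\<And>i. i < n \<Longrightarrow> Re (B $$ (i,i)) \<ge> 0"
      using nn dg B by (auto simp: diag_mat_def)
    then show ?thesis using B s by (auto intro!: sum.cong simp: eta_mult)
  qed
  also have "\<dots> = s * (- (\<Sum>i<n. eta (Re (B $$ (i,i))))) - Re (\<Sum>i<n. B $$ (i,i)) * eta s"
    by (simp add: sum.distrib sum_distrib_left sum_distrib_right)
  also have "- (\<Sum>i<n. eta (Re (B $$ (i,i)))) = vn_entropy A"
  proof -
    have "vn_entropy A = vn_entropy B"
    proof -
      have "similar_mat A B" using sim unfolding similar_mat_def by blast
      then show ?thesis by (simp add: vn_ent char_poly_similar)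
    qed
    then show ?thesis using vn_upper[OF B ut] by simp
  qed
  also have "(\<Sum>i<n. B $$ (i,i)) = mtrace A"
    using mtrace_similar[OF sim A] B by (simp add: mtrace_def)
  finally show ?thesis .
qed

lemma sum_split: "(\<Sum>t<(n::nat)*(C::nat). g t) = (\<Sum>a<n. \<Sum>c<C. g (a*C + c))"
proof (induction n)
  case 0 then show ?case by simp
next
  case (Suc n)
  have "{..<Suc n * C} = {..<n*C} \<union> {n*C..<n*C+C}" by auto
  then have "(\<Sum>t<Suc n*C. g t) = (\<Sum>t<n*C. g t) + (\<Sum>t\<in>{n*C..<n*C+C}. g t)"
    by (simp add: sum.union_disjoint ivl_disj_int)
  also have "(\<Sum>t\<in>{n*C..<n*C+C}. g t) = (\<Sum>c<C. g (n*C + c))"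
    using sum.shift_bounds_nat_ivl[of g 0 "n*C" C] by (simp add: atLeast0LessThan add.commute)
  finally show ?case using Suc by simp
qed

lemma dm_div[simp]: "c < (C::nat) \<Longrightarrow> (x*C + c) div C = x" by simp
lemma dm_mod[simp]: "c < (C::nat) \<Longrightarrow> (x*C + c) mod C = c" by simp

lemma decomp_lt: "a < n \<Longrightarrow> c < (C::nat) \<Longrightarrow> a*C + c < n*C"
proof -
  assume "a < n" "c < C"
  then have "a*C + c < a*C + C" by simp
  also have "\<dots> = (a+1)*C" by simp
  also have "\<dots> \<le> n*C" using \<open>a<n\<close> by (intro mult_right_mono) auto
  finally show ?thesis .
qed

lemma vn_perm: assumes A: "A \<in> carrier_mat N N" and bij: "bij_betw \<pi> {..<N} {..<N}"
  shows "vn_entropy (mat N N (\<lambda>(i,j). A $$ (\<pi> i, \<pi> j))) = vn_entropy A"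
proof -
  define P where "P = mat N N (\<lambda>(i,j). if j = \<pi> i then 1 else (0::complex))"
  define Q where "Q = mat N N (\<lambda>(i,j). if i = \<pi> j then 1 else (0::complex))"
  define A' where "A' = mat N N (\<lambda>(i,j). A $$ (\<pi> i, \<pi> j))"
  have pi: "\<And>i. i < N \<Longrightarrow> \<pi> i < N" using bij by (auto simp: bij_betw_def)
  have inj: "\<And>i j. i<N \<Longrightarrow> j<N \<Longrightarrow> \<pi> i = \<pi> j \<longleftrightarrow> i = j" using bij
    by (auto simp: bij_betw_def inj_on_def)
  have re: "\<And>g. (\<Sum>k\<in>{0..<N}. g (\<pi> k)) = (\<Sum>k\<in>{0..<N}. g k)"
    using sum.reindex_bij_betw[OF bij] by (simp add: atLeast0LessThan)
  have PQ: "P * Q = 1\<^sub>m N"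
  proof (rule eq_matI)
    fix i j assume ij: "i < dim_row (1\<^sub>m N)" "j < dim_col (1\<^sub>m N)"
    then have "(P * Q) $$ (i,j) = (\<Sum>k\<in>{0..<N}. (if k = \<pi> i then 1 else 0) * (if k = \<pi> j then 1 else 0))"
      by (simp add: P_def Q_def scalar_prod_def)
    also have "\<dots> = (if \<pi> i = \<pi> j then 1 else 0)"
      using pi ij by (simp add: if_distrib[of "\<lambda>x. x * _"] sum.delta' cong: if_cong)
    also have "\<dots> = 1\<^sub>m N $$ (i,j)" using ij inj by auto
    finally show "(P * Q) $$ (i,j) = 1\<^sub>m N $$ (i,j)" .
  qed (auto simp: P_def Q_def)
  have QP: "Q * P = 1\<^sub>m N"
  proof (rule eq_matI)
    fix i j assume ij: "i < dim_row (1\<^sub>m N)" "j < dim_col (1\<^sub>m N)"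
    then have "(Q * P) $$ (i,j) = (\<Sum>k\<in>{0..<N}. (if i = \<pi> k then 1 else 0) * (if j = \<pi> k then 1 else 0))"
      by (simp add: P_def Q_def scalar_prod_def)
    also have "\<dots> = (\<Sum>k\<in>{0..<N}. (if i = k then 1 else 0) * (if j = k then 1 else 0))"
      by (rule re[where g = "\<lambda>k. (if i = k then 1 else 0) * (if j = k then 1 else (0::complex))"])
    also have "\<dots> = 1\<^sub>m N $$ (i,j)" using ij
      by (simp add: if_distrib[of "\<lambda>x. x * _"] sum.delta cong: if_cong)
    finally show "(Q * P) $$ (i,j) = 1\<^sub>m N $$ (i,j)" .
  qed (auto simp: P_def Q_def)
  have PA: "P * A = mat N N (\<lambda>(i,l). A $$ (\<pi> i, l))"
  proof (rule eq_matI)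
    fix i l assume il: "i < dim_row (mat N N (\<lambda>(i,l). A $$ (\<pi> i, l)))" "l < dim_col (mat N N (\<lambda>(i,l). A $$ (\<pi> i, l)))"
    then have "(P * A) $$ (i,l) = (\<Sum>k\<in>{0..<N}. (if k = \<pi> i then 1 else 0) * A $$ (k,l))"
      using A by (simp add: P_def scalar_prod_def)
    also have "\<dots> = A $$ (\<pi> i, l)" using pi il by (simp add: if_distrib[of "\<lambda>x. x * _"] sum.delta' cong: if_cong)
    finally show "(P * A) $$ (i,l) = mat N N (\<lambda>(i,l). A $$ (\<pi> i, l)) $$ (i,l)" using il by simp
  qed (use A in \<open>auto simp: P_def\<close>)
  have PAQ: "A' = P * A * Q"
  proof -
    have "A' = mat N N (\<lambda>(i,l). A $$ (\<pi> i, l)) * Q"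
    proof (rule eq_matI)
      fix i j assume ij: "i < dim_row (mat N N (\<lambda>(i,l). A $$ (\<pi> i, l)) * Q)" "j < dim_col (mat N N (\<lambda>(i,l). A $$ (\<pi> i, l)) * Q)"
      then have ij': "i < N" "j < N" by (auto simp: Q_def)
      then have "(mat N N (\<lambda>(i,l). A $$ (\<pi> i, l)) * Q) $$ (i,j) = (\<Sum>l\<in>{0..<N}. A $$ (\<pi> i, l) * (if l = \<pi> j then 1 else 0))"
        by (simp add: Q_def scalar_prod_def)
      also have "\<dots> = A $$ (\<pi> i, \<pi> j)" using pi ij'
        by (simp add: if_distrib[of "\<lambda>x. _ * x"] sum.delta' cong: if_cong)
      finally show "A' $$ (i,j) = (mat N N (\<lambda>(i,l). A $$ (\<pi> i, l)) * Q) $$ (i,j)" using ij' by (simp add: A'_def)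
    qed (auto simp: Q_def A'_def)
    then show ?thesis by (simp add: PA)
  qed
  have "similar_mat A' A"
    by (rule similar_matI[OF _ PQ QP PAQ]) (use A in \<open>auto simp: P_def Q_def A'_def\<close>)
  then show ?thesis unfolding A'_def[symmetric] by (simp add: vn_ent char_poly_similar)
qed

definition bd :: "nat \<Rightarrow> nat \<Rightarrow> (nat \<Rightarrow> complex mat) \<Rightarrow> complex mat" where
 "bd N B W = mat (N*B) (N*B) (\<lambda>(i,j). if i div B = j div B then W (i div B) $$ (i mod B, j mod B) else 0)"

lemma bd_Suc: assumes W: "W N \<in> carrier_mat B B"
  shows "bd (Suc N) B W = four_block_mat (bd N B W) (0\<^sub>m (N*B) B) (0\<^sub>m B (N*B)) (W N)"
proof (rule eq_matI)
  fix i j assume "i < dim_row (four_block_mat (bd N B W) (0\<^sub>m (N*B) B) (0\<^sub>m B (N*B)) (W N))"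
    "j < dim_col (four_block_mat (bd N B W) (0\<^sub>m (N*B) B) (0\<^sub>m B (N*B)) (W N))"
  then have ij: "i < N*B + B" "j < N*B + B" using W by (auto simp: bd_def)
  have lo: "\<And>x. x < N*B \<Longrightarrow> x div B < N" by (simp add: less_mult_imp_div_less)
  have hi: "\<And>x. N*B \<le> x \<Longrightarrow> x < N*B + B \<Longrightarrow> x div B = N \<and> x mod B = x - N*B"
  proof -
    fix x assume "N*B \<le> x" "x < N*B + B"
    then obtain t where "x = N*B + t" "t < B" by (metis add_less_cancel_left le_Suc_ex)
    then show "x div B = N \<and> x mod B = x - N*B" by (simp add: add.commute)
  qed
  show "bd (Suc N) B W $$ (i,j) = four_block_mat (bd N B W) (0\<^sub>m (N*B) B) (0\<^sub>m B (N*B)) (W N) $$ (i,j)"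
    using ij W lo[of i] lo[of j] hi[of i] hi[of j]
    by (cases "i < N*B"; cases "j < N*B") (auto simp: bd_def)
qed (use W in \<open>auto simp: bd_def\<close>)

lemma vn_bd: assumes "\<And>t. t < N \<Longrightarrow> W t \<in> carrier_mat B B"
  shows "vn_entropy (bd N B W) = (\<Sum>t<N. vn_entropy (W t))"
  using assms
proof (induction N)
  case 0
  have "vn_entropy (bd 0 B W) = 0" by (subst vn_diag[of _ 0]) (auto simp: bd_def)
  then show ?case by simp
next
  case (Suc N)
  have W: "W N \<in> carrier_mat B B" using Suc by auto
  have "vn_entropy (bd (Suc N) B W) = vn_entropy (bd N B W) + vn_entropy (W N)"
    unfolding bd_Suc[of W N B, OF W] by (rule vn_block) (use W in \<open>auto simp: bd_def\<close>)
  then show ?case using Suc by simp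
qed

lemma vn_cq: assumes M: "M \<in> carrier_mat (n*(B*C)) (n*(B*C))"
 and W: "\<And>a c. a < n \<Longrightarrow> c < C \<Longrightarrow> W a c \<in> carrier_mat B B"
 and ent: "\<And>a a' b b' c c'. a<n \<Longrightarrow> a'<n \<Longrightarrow> b<B \<Longrightarrow> b'<B \<Longrightarrow> c<C \<Longrightarrow> c'<C \<Longrightarrow>
    M $$ (a*(B*C) + b*C + c, a'*(B*C) + b'*C + c') = (if a = a' \<and> c = c' then W a c $$ (b,b') else 0)"
 shows "vn_entropy M = (\<Sum>a<n. \<Sum>c<C. vn_entropy (W a c))"
proof -
  define N where "N = n*(B*C)"
  define \<pi> where "\<pi> = (\<lambda>i. ((i div B) div C)*(B*C) + (i mod B)*C + (i div B) mod C)"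
  have NN: "N = (n*C)*B" by (simp add: N_def ac_simps)
  have comp: "\<And>i. i < N \<Longrightarrow> i div B div C < n \<and> i mod B < B \<and> i div B mod C < C"
  proof -
    fix i assume "i < N"
    have B: "B > 0" using \<open>i<N\<close> unfolding NN by (cases B) auto
    have C: "C > 0" using \<open>i<N\<close> unfolding NN by (cases C) auto
    have i1: "i div B < n*C" using \<open>i<N\<close> unfolding NN by (simp add: less_mult_imp_div_less)
    show "i div B div C < n \<and> i mod B < B \<and> i div B mod C < C"
      using B C i1 by (auto simp: less_mult_imp_div_less)
  qed
  have piN: "\<And>i. i < N \<Longrightarrow> \<pi> i < N"
  proof -
    fix i assume i: "i < N"
    from comp[OF i] have a: "i div B div C < n" and b: "i mod B < B" and c: "i div B mod C < C" by auto
    have "(i mod B)*C + (i div B) mod C < B*C" using decomp_lt[OF b c] .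
    from decomp_lt[OF a this] show "\<pi> i < N" by (simp add: \<pi>_def N_def add.assoc mult.commute)
  qed
  have pidm: "\<And>i. i < N \<Longrightarrow> \<pi> i div (B*C) = i div B div C \<and> (\<pi> i mod (B*C)) div C = i mod B \<and> \<pi> i mod C = i div B mod C"
  proof -
    fix i assume i: "i < N"
    from comp[OF i] have a: "i div B div C < n" and b: "i mod B < B" and c: "i div B mod C < C" by auto
    have bc: "(i mod B)*C + (i div B) mod C < B*C" using decomp_lt[OF b c] .
    define a where "a = i div B div C"
    define b where "b = i mod B"
    define c where "c = i div B mod C"
    have e1: "\<pi> i = a*(B*C) + (b*C + c)" unfolding \<pi>_def a_def b_def c_def by (simp add: add.assoc)
    have e2: "\<pi> i = (a*B + b)*C + c" unfolding e1 by (simp add: algebra_simps)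
    have bc': "b*C + c < B*C" using bc unfolding b_def c_def .
    have c': "c < C" using c unfolding c_def .
    have "\<pi> i div (B*C) = a" unfolding e1 using bc' by (rule dm_div)
    moreover have "\<pi> i mod (B*C) = b*C + c" unfolding e1 using bc' by (rule dm_mod)
    moreover have "(b*C + c) div C = b" using c' by (rule dm_div)
    moreover have "\<pi> i mod C = c" unfolding e2 using c' by (rule dm_mod)
    ultimately show "?thesis i" unfolding a_def b_def c_def by simp
  qed
  have injp: "inj_on \<pi> {..<N}"
  proof (rule inj_onI)
    fix i j assume i: "i \<in> {..<N}" and j: "j \<in> {..<N}" and e: "\<pi> i = \<pi> j"
    from pidm[of i] pidm[of j] i j e have "i div B div C = j div B div C" "i mod B = j mod B" "i div B mod C = j div B mod C"
      by auto
    then have "i div B = j div B" by (metis div_mult_mod_eq)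
    then show "i = j" using \<open>i mod B = j mod B\<close> by (metis div_mult_mod_eq)
  qed
  have bij: "bij_betw \<pi> {..<N} {..<N}"
    unfolding bij_betw_def using injp piN endo_inj_surj[of "{..<N}" \<pi>] by auto
  have "vn_entropy M = vn_entropy (mat N N (\<lambda>(i,j). M $$ (\<pi> i, \<pi> j)))"
    by (rule vn_perm[symmetric]) (use M bij in \<open>auto simp: N_def\<close>)
  also have "mat N N (\<lambda>(i,j). M $$ (\<pi> i, \<pi> j)) = bd (n*C) B (\<lambda>t. W (t div C) (t mod C))"
  proof (rule eq_matI)
    fix i j assume "i < dim_row (bd (n * C) B (\<lambda>t. W (t div C) (t mod C)))"
      "j < dim_col (bd (n * C) B (\<lambda>t. W (t div C) (t mod C)))"
    then have ij: "i < N" "j < N" by (auto simp: bd_def NN)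
    from comp[OF ij(1)] comp[OF ij(2)] have r:
      "M $$ (\<pi> i, \<pi> j) = (if i div B div C = j div B div C \<and> i div B mod C = j div B mod C
          then W (i div B div C) (i div B mod C) $$ (i mod B, j mod B) else 0)"
      unfolding \<pi>_def by (intro ent) auto
    have "(i div B div C = j div B div C \<and> i div B mod C = j div B mod C) = (i div B = j div B)"
      by (metis div_mult_mod_eq)
    then show "mat N N (\<lambda>(i,j). M $$ (\<pi> i, \<pi> j)) $$ (i,j) = bd (n*C) B (\<lambda>t. W (t div C) (t mod C)) $$ (i,j)"
      using ij r by (simp add: bd_def NN)
  qed (auto simp: bd_def NN)
  also have "vn_entropy (bd (n*C) B (\<lambda>t. W (t div C) (t mod C))) = (\<Sum>t<n*C. vn_entropy (W (t div C) (t mod C)))"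
  proof (rule vn_bd)
    fix t assume t: "t < n*C"
    then have "C > 0" by (metis mult_0_right not_less0 neq0_conv)
    then show "W (t div C) (t mod C) \<in> carrier_mat B B" using t
      by (intro W) (auto simp: less_mult_imp_div_less)
  qed
  also have "\<dots> = (\<Sum>a<n. \<Sum>c<C. vn_entropy (W a c))"
    by (subst sum_split) (intro sum.cong refl, simp)
  finally show ?thesis .
qed

lemma msum_index[simp]: "i < n \<Longrightarrow> j < m \<Longrightarrow> msum n m f I $$ (i,j) = (\<Sum>k\<in>I. f k $$ (i,j))"
  "dim_row (msum n m f I) = n" "dim_col (msum n m f I) = m"
  by (auto simp: msum_def)

lemma kron_index: "i < dim_row A * dim_row B \<Longrightarrow> j < dim_col A * dim_col B \<Longrightarrow>
  kron A B $$ (i,j) = A $$ (i div dim_row B, j div dim_col B) * B $$ (i mod dim_row B, j mod dim_col B)"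
  "dim_row (kron A B) = dim_row A * dim_row B" "dim_col (kron A B) = dim_col A * dim_col B"
  by (auto simp: kron_def)

lemma kron_entry2: assumes A: "A \<in> carrier_mat m m'" and B: "B \<in> carrier_mat k k'"
  and b: "b < m" "b' < m'" and c: "c < k" "c' < k'"
  shows "kron A B $$ (b*k + c, b'*k' + c') = A $$ (b,b') * B $$ (c,c')"
proof -
  have i: "b*k + c < m*k" "b'*k' + c' < m'*k'" using decomp_lt b c by auto
  have dB: "dim_row B = k" "dim_col B = k'" using B by auto
  have dA: "dim_row A = m" "dim_col A = m'" using A by auto
  have "kron A B $$ (b*k + c, b'*k' + c') = A $$ ((b*k + c) div k, (b'*k' + c') div k') * B $$ ((b*k + c) mod k, (b'*k' + c') mod k')"
    unfolding kron_def dB dA using i by (subst index_mat(1)) auto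
  also have "\<dots> = A $$ (b,b') * B $$ (c,c')"
    by (simp only: dm_div[OF c(1)] dm_div[OF c(2)] dm_mod[OF c(1)] dm_mod[OF c(2)])
  finally show ?thesis .
qed

lemma proj_index[simp]: "i < n \<Longrightarrow> j < n \<Longrightarrow> proj n k $$ (i,j) = (if i = k \<and> j = k then 1 else 0)"
  "dim_row (proj n k) = n" "dim_col (proj n k) = n"
  by (auto simp: proj_def)

lemma proj_carrier[simp]: "proj n k \<in> carrier_mat n n"
  unfolding carrier_mat_def by simp

lemma sum_delta_pair: "c < (C::nat) \<Longrightarrow>
  (\<Sum>j<C. f j * (if c = j \<and> c' = j then 1 else 0)) = (if c = c' then f c else (0::complex))"
proof (cases "c = c'")
  case True
  assume c: "c < C"
  have "(\<Sum>j<C. f j * (if c = j \<and> c' = j then 1 else 0)) = (\<Sum>j<C. if j = c then f c else 0)"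
    using True by (intro sum.cong) auto
  then show ?thesis using True c by simp
next
  case False
  then show ?thesis by (auto intro!: sum.neutral)
qed

lemma valid_dens: assumes "valid_encoding n e" "x < n" "j < dimC e" shows "density (dimB e) (omega e x j)"
  using assms unfolding valid_encoding_def by blast

lemma valid_om: assumes "valid_encoding n e" "x < n" "j < dimC e" shows "omega e x j \<in> carrier_mat (dimB e) (dimB e)"
  using valid_dens[OF assms] unfolding density_def by blast

lemma valid_p: assumes "valid_encoding n e" "x < n" "j < dimC e" shows "pcond e x j \<ge> 0"
  using assms unfolding valid_encoding_def by blast

lemma valid_sum: assumes "valid_encoding n e" "x < n" shows "(\<Sum>j<dimC e. pcond e x j) = 1"
  using assms unfolding valid_encoding_def by blast

lemma enc_carrier: "enc_state e x \<in> carrier_mat (dimB e * dimC e) (dimB e * dimC e)"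
  unfolding enc_state_def carrier_mat_def by (simp only: msum_index mem_Collect_eq)

lemma rho_carrier: "rhoABC n r e \<in> carrier_mat (n * (dimB e * dimC e)) (n * (dimB e * dimC e))"
  unfolding rhoABC_def carrier_mat_def by (simp only: msum_index mem_Collect_eq)

lemma enc_entry: assumes v: "valid_encoding n e" and x: "x < n" and b: "b < dimB e" "b' < dimB e"
  and c: "c < dimC e" "c' < dimC e"
  shows "enc_state e x $$ (b * dimC e + c, b' * dimC e + c') =
    (if c = c' then complex_of_real (pcond e x c) * omega e x c $$ (b,b') else 0)"
proof -
  let ?B = "dimB e" let ?C = "dimC e"
  have om: "\<And>j. j < ?C \<Longrightarrow> omega e x j \<in> carrier_mat ?B ?B" using valid_om[OF v x] by auto
  have i: "b * ?C + c < ?B * ?C" "b' * ?C + c' < ?B * ?C" using decomp_lt b c by auto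
  have t: "(complex_of_real (pcond e x j) \<cdot>\<^sub>m kron (omega e x j) (proj ?C j)) $$ (b * ?C + c, b' * ?C + c')
     = (complex_of_real (pcond e x j) * omega e x j $$ (b,b')) * (if c = j \<and> c' = j then 1 else 0)"
    if j: "j < ?C" for j
  proof -
    have d: "dim_row (kron (omega e x j) (proj ?C j)) = ?B * ?C" "dim_col (kron (omega e x j) (proj ?C j)) = ?B * ?C"
      using om[OF j] by (auto simp: kron_index)
    have "kron (omega e x j) (proj ?C j) $$ (b * ?C + c, b' * ?C + c') = omega e x j $$ (b,b') * proj ?C j $$ (c,c')"
      by (rule kron_entry2[OF om[OF j] _ b c]) simp
    then show ?thesis using d i c by simp
  qed
  have "enc_state e x $$ (b * ?C + c, b' * ?C + c') =
     (\<Sum>j<?C. (complex_of_real (pcond e x j) * omega e x j $$ (b,b')) * (if c = j \<and> c' = j then 1 else 0))"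
    unfolding enc_state_def using i by (simp add: t)
  also have "\<dots> = (if c = c' then complex_of_real (pcond e x c) * omega e x c $$ (b,b') else 0)"
    by (rule sum_delta_pair[OF c(1)])
  finally show ?thesis .
qed

lemma rho_entry: assumes v: "valid_encoding n e" and x: "x < n" "x' < n" and b: "b < dimB e" "b' < dimB e"
  and c: "c < dimC e" "c' < dimC e"
  shows "rhoABC n r e $$ (x * (dimB e * dimC e) + b * dimC e + c, x' * (dimB e * dimC e) + b' * dimC e + c') =
    (if x = x' \<and> c = c' then complex_of_real (r x * pcond e x c) * omega e x c $$ (b,b') else 0)"
proof -
  let ?B = "dimB e" let ?C = "dimC e"
  have bc: "b * ?C + c < ?B * ?C" "b' * ?C + c' < ?B * ?C" using decomp_lt b c by auto
  have i: "x * (?B * ?C) + (b * ?C + c) < n * (?B * ?C)" "x' * (?B * ?C) + (b' * ?C + c') < n * (?B * ?C)"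
    using decomp_lt x bc by auto
  have t: "(complex_of_real (r y) \<cdot>\<^sub>m kron (proj n y) (enc_state e y)) $$ (x * (?B * ?C) + (b * ?C + c), x' * (?B * ?C) + (b' * ?C + c'))
     = (complex_of_real (r y) * enc_state e y $$ (b * ?C + c, b' * ?C + c')) * (if x = y \<and> x' = y then 1 else 0)"
    if y: "y < n" for y
  proof -
    have ec: "dim_row (enc_state e y) = ?B * ?C" "dim_col (enc_state e y) = ?B * ?C"
      using enc_carrier[of e y] by auto
    have d: "dim_row (kron (proj n y) (enc_state e y)) = n * (?B * ?C)" "dim_col (kron (proj n y) (enc_state e y)) = n * (?B * ?C)"
      using ec by (auto simp: kron_index)
    have "kron (proj n y) (enc_state e y) $$ (x * (?B * ?C) + (b * ?C + c), x' * (?B * ?C) + (b' * ?C + c'))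
       = proj n y $$ (x, x') * enc_state e y $$ (b * ?C + c, b' * ?C + c')"
      by (rule kron_entry2[OF _ enc_carrier x bc]) simp
    then show ?thesis using d i x by simp
  qed
  have "rhoABC n r e $$ (x * (?B * ?C) + (b * ?C + c), x' * (?B * ?C) + (b' * ?C + c')) =
     (\<Sum>y<n. (complex_of_real (r y) * enc_state e y $$ (b * ?C + c, b' * ?C + c')) * (if x = y \<and> x' = y then 1 else 0))"
    unfolding rhoABC_def using i by (simp add: t)
  also have "\<dots> = (if x = x' then complex_of_real (r x) * enc_state e x $$ (b * ?C + c, b' * ?C + c') else 0)"
    by (rule sum_delta_pair[OF x(1)])
  also have "\<dots> = (if x = x' \<and> c = c' then complex_of_real (r x * pcond e x c) * omega e x c $$ (b,b') else 0)"
    using enc_entry[OF v x(1) b c] by auto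
  finally show ?thesis by (simp add: add.assoc)
qed

definition qv :: "nat \<Rightarrow> (nat \<Rightarrow> real) \<Rightarrow> encoding \<Rightarrow> nat \<Rightarrow> real" where
  "qv n r e c = (\<Sum>x<n. r x * pcond e x c)"

definition Wm :: "nat \<Rightarrow> (nat \<Rightarrow> real) \<Rightarrow> encoding \<Rightarrow> nat \<Rightarrow> complex mat" where
  "Wm n r e c = mat (dimB e) (dimB e) (\<lambda>(b,b'). \<Sum>x<n. complex_of_real (r x * pcond e x c) * omega e x c $$ (b,b'))"

lemma trace_om: assumes v: "valid_encoding n e" and x: "x < n" and c: "c < dimC e"
  shows "(\<Sum>b<dimB e. omega e x c $$ (b,b)) = 1"
proof -
  have "density (dimB e) (omega e x c)" by (rule valid_dens[OF v x c])
  then show ?thesis unfolding density_def mtrace_def by auto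
qed

lemma tr_sum_x: assumes v: "valid_encoding n e" and x: "x < n"
  shows "(\<Sum>c<dimC e. \<Sum>b<dimB e. complex_of_real (r x * pcond e x c) * omega e x c $$ (b,b)) = complex_of_real (r x)"
proof -
  have "(\<Sum>c<dimC e. \<Sum>b<dimB e. complex_of_real (r x * pcond e x c) * omega e x c $$ (b,b))
      = (\<Sum>c<dimC e. complex_of_real (r x * pcond e x c))"
    by (intro sum.cong refl) (simp add: sum_distrib_left[symmetric] trace_om[OF v x])
  also have "\<dots> = complex_of_real (r x * (\<Sum>c<dimC e. pcond e x c))"
    by (simp add: sum_distrib_left)
  finally show ?thesis using valid_sum[OF v x] by simp
qed

lemma tr_sum_c: assumes v: "valid_encoding n e" and c: "c < dimC e"
  shows "(\<Sum>x<n. \<Sum>b<dimB e. complex_of_real (r x * pcond e x c) * omega e x c $$ (b,b)) = complex_of_real (qv n r e c)"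
proof -
  have "(\<Sum>x<n. \<Sum>b<dimB e. complex_of_real (r x * pcond e x c) * omega e x c $$ (b,b))
      = (\<Sum>x<n. complex_of_real (r x * pcond e x c))"
    by (intro sum.cong refl) (simp add: sum_distrib_left[symmetric] trace_om[OF v _ c])
  then show ?thesis by (simp add: qv_def)
qed

lemma rho_entry': assumes v: "valid_encoding n e" and x: "x < n" "x' < n" and b: "b < dimB e" "b' < dimB e"
  and c: "c < dimC e" "c' < dimC e"
  shows "rhoABC n r e $$ (x * (dimB e * dimC e) + (b * dimC e + c), x' * (dimB e * dimC e) + (b' * dimC e + c')) =
    (if x = x' \<and> c = c' then complex_of_real (r x * pcond e x c) * omega e x c $$ (b,b') else 0)"
  using rho_entry[OF v x b c] by (simp add: add.assoc)

lemma S_A_formula: assumes v: "valid_encoding n e" shows "S_A n r e = - (\<Sum>x<n. eta (r x))"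
proof -
  let ?B = "dimB e" let ?C = "dimC e"
  define M where "M = ptrace2 n (?B*?C) (rhoABC n r e)"
  have M: "M \<in> carrier_mat n n" unfolding M_def ptrace2_def by (rule mat_carrier)
  have ent: "M $$ (i,j) = (if i = j then complex_of_real (r i) else 0)" if i: "i < n" and j: "j < n" for i j
  proof -
    have "M $$ (i,j) = (\<Sum>k<?B*?C. rhoABC n r e $$ (i*(?B*?C) + k, j*(?B*?C) + k))"
      unfolding M_def ptrace2_def by (simp only: index_mat(1)[OF i j] case_prod_conv)
    also have "\<dots> = (\<Sum>b<?B. \<Sum>c<?C. rhoABC n r e $$ (i*(?B*?C) + (b*?C + c), j*(?B*?C) + (b*?C + c)))"
      by (rule sum_split)
    also have "\<dots> = (\<Sum>b<?B. \<Sum>c<?C. if i = j then complex_of_real (r i * pcond e i c) * omega e i c $$ (b,b) else 0)"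
      by (intro sum.cong refl) (simp only: rho_entry'[OF v i j] lessThan_iff, simp)
    also have "\<dots> = (if i = j then complex_of_real (r i) else 0)"
    proof (cases "i = j")
      case True
      then show ?thesis using tr_sum_x[OF v i, of r] by (simp add: sum.swap[of _ "{..<?B}"])
    qed simp
    finally show ?thesis .
  qed
  have "S_A n r e = vn_entropy M" unfolding S_A_def M_def ..
  also have "\<dots> = - (\<Sum>i<n. eta (Re (M $$ (i,i))))" by (rule vn_diag[OF M]) (simp add: ent)
  also have "\<dots> = - (\<Sum>x<n. eta (r x))" by (simp add: ent)
  finally show ?thesis .
qed

lemma S_C_formula: assumes v: "valid_encoding n e" shows "S_C n r e = - (\<Sum>c<dimC e. eta (qv n r e c))"
proof -
  let ?B = "dimB e" let ?C = "dimC e"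
  define M where "M = ptrace1 (n * ?B) ?C (rhoABC n r e)"
  have M: "M \<in> carrier_mat ?C ?C" unfolding M_def ptrace1_def by (rule mat_carrier)
  have ent: "M $$ (i,j) = (if i = j then complex_of_real (qv n r e i) else 0)" if i: "i < ?C" and j: "j < ?C" for i j
  proof -
    have "M $$ (i,j) = (\<Sum>k<n*?B. rhoABC n r e $$ (k*?C + i, k*?C + j))"
      unfolding M_def ptrace1_def by (simp only: index_mat(1)[OF i j] case_prod_conv)
    also have "\<dots> = (\<Sum>x<n. \<Sum>b<?B. rhoABC n r e $$ ((x*?B + b)*?C + i, (x*?B + b)*?C + j))"
      by (rule sum_split)
    also have "\<dots> = (\<Sum>x<n. \<Sum>b<?B. rhoABC n r e $$ (x*(?B*?C) + (b*?C + i), x*(?B*?C) + (b*?C + j)))"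
      by (simp add: algebra_simps)
    also have "\<dots> = (\<Sum>x<n. \<Sum>b<?B. if i = j then complex_of_real (r x * pcond e x i) * omega e x i $$ (b,b) else 0)"
      by (intro sum.cong refl) (simp only: rho_entry'[OF v _ _ _ _ i j] lessThan_iff, simp)
    also have "\<dots> = (if i = j then complex_of_real (qv n r e i) else 0)"
    proof (cases "i = j")
      case True
      then show ?thesis using tr_sum_c[OF v i, of r] by simp
    qed simp
    finally show ?thesis .
  qed
  have "S_C n r e = vn_entropy M" unfolding S_C_def M_def ..
  also have "\<dots> = - (\<Sum>i<?C. eta (Re (M $$ (i,i))))" by (rule vn_diag[OF M]) (simp add: ent)
  also have "\<dots> = - (\<Sum>c<?C. eta (qv n r e c))" by (simp add: ent)
  finally show ?thesis .
qed

lemma S_AC_formula: assumes v: "valid_encoding n e"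
  shows "S_AC n r e = - (\<Sum>x<n. \<Sum>c<dimC e. eta (r x * pcond e x c))"
proof -
  let ?B = "dimB e" let ?C = "dimC e"
  define M where "M = ptrace_mid n ?B ?C (rhoABC n r e)"
  have M: "M \<in> carrier_mat (n*?C) (n*?C)" unfolding M_def ptrace_mid_def by (rule mat_carrier)
  have ent: "M $$ (i,j) = (if i = j then complex_of_real (r (i div ?C) * pcond e (i div ?C) (i mod ?C)) else 0)"
    if i: "i < n*?C" and j: "j < n*?C" for i j
  proof -
    have C: "?C > 0" using i by (cases ?C) auto
    have ii: "i div ?C < n" "i mod ?C < ?C" "j div ?C < n" "j mod ?C < ?C"
      using i j C by (auto simp: less_mult_imp_div_less)
    have eq: "(i div ?C = j div ?C \<and> i mod ?C = j mod ?C) = (i = j)" by (metis div_mult_mod_eq)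
    have "M $$ (i,j) = (\<Sum>k<?B. rhoABC n r e $$ ((i div ?C)*(?B*?C) + k*?C + i mod ?C, (j div ?C)*(?B*?C) + k*?C + j mod ?C))"
      unfolding M_def ptrace_mid_def by (simp only: index_mat(1)[OF i j] case_prod_conv)
    also have "\<dots> = (\<Sum>b<?B. if i = j then complex_of_real (r (i div ?C) * pcond e (i div ?C) (i mod ?C)) * omega e (i div ?C) (i mod ?C) $$ (b,b) else 0)"
    proof (intro sum.cong refl)
      fix b assume "b \<in> {..<?B}"
      then have b: "b < ?B" by simp
      show "rhoABC n r e $$ ((i div ?C)*(?B*?C) + b*?C + i mod ?C, (j div ?C)*(?B*?C) + b*?C + j mod ?C) =
        (if i = j then complex_of_real (r (i div ?C) * pcond e (i div ?C) (i mod ?C)) * omega e (i div ?C) (i mod ?C) $$ (b,b) else 0)"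
        using rho_entry[OF v ii(1) ii(3) b b ii(2) ii(4), of r] eq by simp
    qed
    also have "\<dots> = (if i = j then complex_of_real (r (i div ?C) * pcond e (i div ?C) (i mod ?C)) else 0)"
      using trace_om[OF v ii(1) ii(2)] by (cases "i = j") (simp_all add: sum_distrib_left[symmetric])
    finally show ?thesis .
  qed
  have "S_AC n r e = vn_entropy M" unfolding S_AC_def M_def ..
  also have "\<dots> = - (\<Sum>i<n*?C. eta (Re (M $$ (i,i))))" by (rule vn_diag[OF M]) (simp add: ent)
  also have "\<dots> = - (\<Sum>i<n*?C. eta (r (i div ?C) * pcond e (i div ?C) (i mod ?C)))" by (simp add: ent)
  also have "\<dots> = - (\<Sum>x<n. \<Sum>c<?C. eta (r x * pcond e x c))"
    by (subst sum_split) (intro arg_cong[where f = uminus] sum.cong refl, simp)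
  finally show ?thesis .
qed

lemma Wm_carrier: "Wm n r e c \<in> carrier_mat (dimB e) (dimB e)"
  unfolding Wm_def by (rule mat_carrier)

lemma S_BC_formula: assumes v: "valid_encoding n e"
  shows "S_BC n r e = (\<Sum>c<dimC e. vn_entropy (Wm n r e c))"
proof -
  let ?B = "dimB e" let ?C = "dimC e"
  define M where "M = ptrace1 n (?B*?C) (rhoABC n r e)"
  have M: "M \<in> carrier_mat (1*(?B*?C)) (1*(?B*?C))" unfolding M_def ptrace1_def mult_1 by (rule mat_carrier)
  have "vn_entropy M = (\<Sum>a<(1::nat). \<Sum>c<?C. vn_entropy (Wm n r e c))"
  proof (rule vn_cq[of M 1 ?B ?C "\<lambda>a c. Wm n r e c"])
    show "M \<in> carrier_mat (1*(?B*?C)) (1*(?B*?C))" by (rule M)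
    show "\<And>a c. a < 1 \<Longrightarrow> c < ?C \<Longrightarrow> Wm n r e c \<in> carrier_mat ?B ?B" by (rule Wm_carrier)
    fix a a' b b' c c' :: nat assume a: "a < 1" "a' < 1" and b: "b < ?B" "b' < ?B" and c: "c < ?C" "c' < ?C"
    have I: "b*?C + c < ?B*?C" "b'*?C + c' < ?B*?C" using decomp_lt b c by auto
    have "M $$ (b*?C + c, b'*?C + c') = (\<Sum>k<n. rhoABC n r e $$ (k*(?B*?C) + (b*?C + c), k*(?B*?C) + (b'*?C + c')))"
      unfolding M_def ptrace1_def by (simp only: index_mat(1)[OF I] case_prod_conv)
    also have "\<dots> = (\<Sum>k<n. if c = c' then complex_of_real (r k * pcond e k c) * omega e k c $$ (b,b') else 0)"
    proof (intro sum.cong refl)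
      fix k assume "k \<in> {..<n}"
      then have k: "k < n" by simp
      show "rhoABC n r e $$ (k*(?B*?C) + (b*?C + c), k*(?B*?C) + (b'*?C + c')) =
         (if c = c' then complex_of_real (r k * pcond e k c) * omega e k c $$ (b,b') else 0)"
        using rho_entry'[OF v k k b c, of r] by simp
    qed
    also have "\<dots> = (if c = c' then Wm n r e c $$ (b,b') else 0)"
      using b by (simp add: Wm_def)
    finally show "M $$ (a*(?B*?C) + b*?C + c, a'*(?B*?C) + b'*?C + c') = (if a = a' \<and> c = c' then Wm n r e c $$ (b,b') else 0)"
      using a by simp
  qed
  then show ?thesis unfolding S_BC_def M_def by simp
qed

lemma S_ABC_formula: assumes v: "valid_encoding n e" and r: "\<And>x. x < n \<Longrightarrow> r x \<ge> 0"
  shows "S_ABC n r e = (\<Sum>x<n. \<Sum>c<dimC e. r x * pcond e x c * vn_entropy (omega e x c) - eta (r x * pcond e x c))"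
proof -
  let ?B = "dimB e" let ?C = "dimC e"
  let ?W = "\<lambda>x c. complex_of_real (r x * pcond e x c) \<cdot>\<^sub>m omega e x c"
  have "S_ABC n r e = (\<Sum>x<n. \<Sum>c<?C. vn_entropy (?W x c))"
    unfolding S_ABC_def
  proof (rule vn_cq[OF rho_carrier])
    show "\<And>a c. a < n \<Longrightarrow> c < ?C \<Longrightarrow> ?W a c \<in> carrier_mat ?B ?B"
      using valid_om[OF v] by auto
    fix a a' b b' c c' assume a: "a < n" "a' < n" and b: "b < ?B" "b' < ?B" and c: "c < ?C" "c' < ?C"
    have om: "omega e a c \<in> carrier_mat ?B ?B" by (rule valid_om[OF v a(1) c(1)])
    have dm: "dim_row (omega e a c) = ?B" "dim_col (omega e a c) = ?B" using om by auto
    show "rhoABC n r e $$ (a*(?B*?C) + b*?C + c, a'*(?B*?C) + b'*?C + c') = (if a = a' \<and> c = c' then ?W a c $$ (b,b') else 0)"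
    proof (cases "a = a' \<and> c = c'")
      case True
      have w: "?W a c $$ (b,b') = complex_of_real (r a * pcond e a c) * omega e a c $$ (b,b')"
        by (rule index_smult_mat(1)) (use dm b in auto)
      show ?thesis unfolding rho_entry[OF v a b c, of r] if_P[OF True] w ..
    next
      case False
      show ?thesis unfolding rho_entry[OF v a b c, of r] if_not_P[OF False] ..
    qed
  qed
  also have "\<dots> = (\<Sum>x<n. \<Sum>c<?C. r x * pcond e x c * vn_entropy (omega e x c) - eta (r x * pcond e x c))"
  proof (intro sum.cong refl)
    fix x c assume "x \<in> {..<n}" "c \<in> {..<?C}"
    then have x: "x < n" and c: "c < ?C" by auto
    have d: "density ?B (omega e x c)" by (rule valid_dens[OF v x c])
    have "vn_entropy (?W x c) = r x * pcond e x c * vn_entropy (omega e x c) - Re (mtrace (omega e x c)) * eta (r x * pcond e x c)"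
      by (rule vn_scale) (use d r[OF x] valid_p[OF v x c] in \<open>auto simp: density_def\<close>)
    then show "vn_entropy (?W x c) = r x * pcond e x c * vn_entropy (omega e x c) - eta (r x * pcond e x c)"
      using d by (simp add: density_def)
  qed
  finally show ?thesis .
qed

lemma mutual_formula: assumes v: "valid_encoding n e"
  shows "mutual_AC n r e = - (\<Sum>x<n. eta (r x)) - (\<Sum>c<dimC e. eta (qv n r e c)) + (\<Sum>x<n. \<Sum>c<dimC e. eta (r x * pcond e x c))"
  unfolding mutual_AC_def S_A_formula[OF v] S_C_formula[OF v] S_AC_formula[OF v] by simp

lemma cmi_formula: assumes v: "valid_encoding n e" and r: "\<And>x. x < n \<Longrightarrow> r x \<ge> 0"
  shows "cmi_AB_C n r e = (\<Sum>c<dimC e. vn_entropy (Wm n r e c) + eta (qv n r e c))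
     - (\<Sum>x<n. \<Sum>c<dimC e. r x * pcond e x c * vn_entropy (omega e x c))"
proof -
  have h: "S_ABC n r e = (\<Sum>x<n. \<Sum>c<dimC e. r x * pcond e x c * vn_entropy (omega e x c) - eta (r x * pcond e x c))"
    by (rule S_ABC_formula[OF v r])
  show ?thesis
    unfolding cmi_AB_C_def S_AC_formula[OF v] S_BC_formula[OF v] h S_C_formula[OF v]
    by (simp add: sum.distrib sum_subtractf)
qed

definition pad :: "nat \<Rightarrow> complex mat \<Rightarrow> complex mat" where
  "pad m X = mat m m (\<lambda>(i,j). if i < dim_row X \<and> j < dim_col X then X $$ (i,j) else 0)"

lemma pad_carrier: "pad m X \<in> carrier_mat m m"
  unfolding pad_def by (rule mat_carrier)

lemma pad_index: "i < m \<Longrightarrow> j < m \<Longrightarrow> pad m X $$ (i,j) = (if i < dim_row X \<and> j < dim_col X then X $$ (i,j) else 0)"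
  unfolding pad_def by simp

lemma sum_if_lt: "C' \<le> (C::nat) \<Longrightarrow> (\<Sum>c<C. if c < C' then f c else 0) = (\<Sum>c<C'. f c)"
proof -
  assume le: "C' \<le> C"
  have "(\<Sum>c<C. if c < C' then f c else 0) = (\<Sum>c\<in>{..<C} \<inter> {c. c < C'}. f c)"
    by (simp add: sum.inter_restrict)
  also have "{..<C} \<inter> {c. c < C'} = {..<C'}" using le by auto
  finally show ?thesis .
qed

lemma vn_pad: assumes X: "X \<in> carrier_mat k k" and km: "k \<le> m"
  shows "vn_entropy (pad m X) = vn_entropy X"
proof -
  have eq: "pad m X = four_block_mat X (0\<^sub>m k (m-k)) (0\<^sub>m (m-k) k) (0\<^sub>m (m-k) (m-k))"
  proof (rule eq_matI)
    fix i j assume ij: "i < dim_row (four_block_mat X (0\<^sub>m k (m-k)) (0\<^sub>m (m-k) k) (0\<^sub>m (m-k) (m-k)))"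
      "j < dim_col (four_block_mat X (0\<^sub>m k (m-k)) (0\<^sub>m (m-k) k) (0\<^sub>m (m-k) (m-k)))"
    then have "i < m" "j < m" using X km by auto
    then show "pad m X $$ (i,j) = four_block_mat X (0\<^sub>m k (m-k)) (0\<^sub>m (m-k) k) (0\<^sub>m (m-k) (m-k)) $$ (i,j)"
      using X km by (auto simp: pad_index)
  qed (use X km in \<open>auto simp: pad_def\<close>)
  have z: "vn_entropy (0\<^sub>m (m-k) (m-k)) = 0"
    by (subst vn_diag[of _ "m-k"]) (auto simp: eta_def)
  show ?thesis unfolding eq by (simp add: vn_block[OF X] z)
qed

lemma qform_pad: assumes X: "X \<in> carrier_mat k k" and km: "k \<le> m" and v: "v \<in> carrier_vec m"
  shows "qform (pad m X) v = qform X (vec k (\<lambda>i. v $ i))"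
proof -
  have "qform (pad m X) v = (\<Sum>i<m. \<Sum>j<m. cnj (v $ i) * pad m X $$ (i,j) * v $ j)"
    using v by (simp add: qform_def)
  also have "\<dots> = (\<Sum>i<m. if i < k then (\<Sum>j<m. if j < k then cnj (v $ i) * X $$ (i,j) * v $ j else 0) else 0)"
    using X by (intro sum.cong refl) (auto simp: pad_index intro!: sum.cong)
  also have "\<dots> = (\<Sum>i<k. \<Sum>j<k. cnj (v $ i) * X $$ (i,j) * v $ j)"
    by (simp add: sum_if_lt[OF km])
  also have "\<dots> = qform X (vec k (\<lambda>i. v $ i))" by (simp add: qform_def)
  finally show ?thesis .
qed

lemma psd_pad: assumes X: "X \<in> carrier_mat k k" and km: "k \<le> m" and p: "psd X"
  shows "psd (pad m X)"
  unfolding psd_def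
proof (intro conjI ballI)
  show "dim_col (pad m X) = dim_row (pad m X)" by (simp add: pad_def)
  fix v :: "complex vec" assume "v \<in> carrier_vec (dim_row (pad m X))"
  then have v: "v \<in> carrier_vec m" by (simp add: pad_def)
  have w: "vec k (\<lambda>i. v $ i) \<in> carrier_vec (dim_row X)" using X by simp
  show "Im (qform (pad m X) v) = 0" "Re (qform (pad m X) v) \<ge> 0"
    unfolding qform_pad[OF X km v] using p w unfolding psd_def by auto
qed

lemma mtrace_pad: assumes X: "X \<in> carrier_mat k k" and km: "k \<le> m"
  shows "mtrace (pad m X) = mtrace X"
proof -
  have d: "dim_row (pad m X) = m" by (simp add: pad_def)
  have "mtrace (pad m X) = (\<Sum>i<m. pad m X $$ (i,i))" by (simp only: mtrace_def d)
  also have "\<dots> = (\<Sum>i<m. if i < k then X $$ (i,i) else 0)"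
  proof (intro sum.cong refl)
    fix i assume "i \<in> {..<m}"
    then show "pad m X $$ (i,i) = (if i < k then X $$ (i,i) else 0)" using X by (simp add: pad_index)
  qed
  also have "\<dots> = (\<Sum>i<k. X $$ (i,i))" by (rule sum_if_lt[OF km])
  also have "\<dots> = mtrace X" using X by (simp add: mtrace_def)
  finally show ?thesis .
qed

lemma density_pad: assumes d: "density k X" and km: "k \<le> m" shows "density m (pad m X)"
proof -
  have X: "X \<in> carrier_mat k k" using d by (simp add: density_def)
  show ?thesis using d unfolding density_def
    using psd_pad[OF X km] mtrace_pad[OF X km] pad_carrier by auto
qed

lemma density_proj: assumes m: "m \<ge> 1" shows "density m (proj m 0)"
proof -
  have m0: "0 \<in> {..<m}" using m by auto
  have psd: "psd (proj m 0)" unfolding psd_def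
  proof (intro conjI ballI)
    show "dim_col (proj m 0) = dim_row (proj m 0)" by simp
    fix v :: "complex vec" assume "v \<in> carrier_vec (dim_row (proj m 0))"
    then have v: "v \<in> carrier_vec m" by simp
    have inner: "(\<Sum>j<m. cnj (v $ i) * proj m 0 $$ (i,j) * v $ j) = (if i = 0 then cnj (v $ 0) * v $ 0 else 0)"
      if i: "i < m" for i
    proof -
      have "(\<Sum>j<m. cnj (v $ i) * proj m 0 $$ (i,j) * v $ j) = (\<Sum>j<m. if j = 0 then (if i = 0 then cnj (v $ 0) * v $ 0 else 0) else 0)"
      proof (intro sum.cong refl)
        fix j assume "j \<in> {..<m}"
        then have j: "j < m" by simp
        show "cnj (v $ i) * proj m 0 $$ (i,j) * v $ j = (if j = 0 then (if i = 0 then cnj (v $ 0) * v $ 0 else 0) else 0)"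
          unfolding proj_index(1)[OF i j] by auto
      qed
      also have "\<dots> = (if i = 0 then cnj (v $ 0) * v $ 0 else 0)" by (simp only: sum.delta[OF finite_lessThan] m0 if_True)
      finally show ?thesis .
    qed
    have "qform (proj m 0) v = (\<Sum>i<m. \<Sum>j<m. cnj (v $ i) * proj m 0 $$ (i,j) * v $ j)"
      using v by (simp only: qform_def carrier_vecD)
    also have "\<dots> = (\<Sum>i<m. if i = 0 then cnj (v $ 0) * v $ 0 else 0)"
      by (intro sum.cong refl) (rule inner, simp)
    also have "\<dots> = cnj (v $ 0) * v $ 0" by (simp only: sum.delta[OF finite_lessThan] m0 if_True)
    also have "\<dots> = complex_of_real ((cmod (v $ 0))\<^sup>2)"
      by (simp add: complex_norm_square mult.commute del: of_real_power)
    finally have q: "qform (proj m 0) v = complex_of_real ((cmod (v $ 0))\<^sup>2)" .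
    show "Im (qform (proj m 0) v) = 0" "Re (qform (proj m 0) v) \<ge> 0" unfolding q by auto
  qed
  have "mtrace (proj m 0) = (\<Sum>i<m. if i = 0 then 1 else 0)"
    by (simp only: mtrace_def proj_index(2)) (intro sum.cong refl, simp)
  also have "\<dots> = 1" by (simp only: sum.delta[OF finite_lessThan] m0 if_True)
  finally show ?thesis using psd by (simp add: density_def)
qed

lemma qform_sum_mat: assumes v: "v \<in> carrier_vec B"
  shows "qform (mat B B (\<lambda>(b,b'). \<Sum>x\<in>X. f x * A x $$ (b,b'))) v = (\<Sum>x\<in>X. f x * qform (A x) v)"
proof -
  have "qform (mat B B (\<lambda>(b,b'). \<Sum>x\<in>X. f x * A x $$ (b,b'))) v
     = (\<Sum>i<B. \<Sum>j<B. cnj (v $ i) * (\<Sum>x\<in>X. f x * A x $$ (i,j)) * v $ j)"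
    using v by (simp add: qform_def)
  also have "\<dots> = (\<Sum>i<B. \<Sum>j<B. \<Sum>x\<in>X. f x * (cnj (v $ i) * A x $$ (i,j) * v $ j))"
    by (simp add: sum_distrib_left sum_distrib_right ac_simps)
  also have "\<dots> = (\<Sum>i<B. \<Sum>x\<in>X. \<Sum>j<B. f x * (cnj (v $ i) * A x $$ (i,j) * v $ j))"
    by (intro sum.cong refl) (rule sum.swap)
  also have "\<dots> = (\<Sum>x\<in>X. \<Sum>i<B. \<Sum>j<B. f x * (cnj (v $ i) * A x $$ (i,j) * v $ j))"
    by (rule sum.swap)
  also have "\<dots> = (\<Sum>x\<in>X. f x * qform (A x) v)"
    using v by (simp add: qform_def sum_distrib_left)
  finally show ?thesis .
qed

lemma psd_sum_mat: assumes f: "\<And>x. x \<in> X \<Longrightarrow> f x \<ge> 0" and A: "\<And>x. x \<in> X \<Longrightarrow> psd (A x) \<and> A x \<in> carrier_mat B B"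
  shows "psd (mat B B (\<lambda>(b,b'). \<Sum>x\<in>X. complex_of_real (f x) * A x $$ (b,b')))"
  unfolding psd_def
proof (intro conjI ballI)
  show "dim_col (mat B B (\<lambda>(b,b'). \<Sum>x\<in>X. complex_of_real (f x) * A x $$ (b,b'))) =
    dim_row (mat B B (\<lambda>(b,b'). \<Sum>x\<in>X. complex_of_real (f x) * A x $$ (b,b')))" by simp
  fix v :: "complex vec" assume "v \<in> carrier_vec (dim_row (mat B B (\<lambda>(b,b'). \<Sum>x\<in>X. complex_of_real (f x) * A x $$ (b,b'))))"
  then have v: "v \<in> carrier_vec B" by simp
  have q: "\<And>x. x \<in> X \<Longrightarrow> Im (qform (A x) v) = 0 \<and> Re (qform (A x) v) \<ge> 0"
    using A v unfolding psd_def by auto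
  show "Im (qform (mat B B (\<lambda>(b,b'). \<Sum>x\<in>X. complex_of_real (f x) * A x $$ (b,b'))) v) = 0"
    unfolding qform_sum_mat[OF v] using q by (simp add: Im_sum)
  show "Re (qform (mat B B (\<lambda>(b,b'). \<Sum>x\<in>X. complex_of_real (f x) * A x $$ (b,b'))) v) \<ge> 0"
    unfolding qform_sum_mat[OF v] using q f by (simp add: Re_sum sum_nonneg)
qed

lemma psd_Wm: assumes v: "valid_encoding n e" and r: "\<And>x. x < n \<Longrightarrow> r x \<ge> 0" and c: "c < dimC e"
  shows "psd (Wm n r e c)"
  unfolding Wm_def
  by (rule psd_sum_mat) (use r valid_p[OF v _ c] valid_dens[OF v _ c] in \<open>auto simp: density_def\<close>)

lemma mtrace_Wm: assumes v: "valid_encoding n e" and c: "c < dimC e"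
  shows "mtrace (Wm n r e c) = complex_of_real (qv n r e c)"
proof -
  have "mtrace (Wm n r e c) = (\<Sum>b<dimB e. \<Sum>x<n. complex_of_real (r x * pcond e x c) * omega e x c $$ (b,b))"
    unfolding mtrace_def Wm_def by simp
  also have "\<dots> = (\<Sum>x<n. \<Sum>b<dimB e. complex_of_real (r x * pcond e x c) * omega e x c $$ (b,b))"
    by (rule sum.swap)
  also have "\<dots> = complex_of_real (qv n r e c)" by (rule tr_sum_c[OF v c])
  finally show ?thesis .
qed

lemma qv_nonneg: assumes v: "valid_encoding n e" and r: "\<And>x. x < n \<Longrightarrow> r x \<ge> 0" and c: "c < dimC e"
  shows "qv n r e c \<ge> 0"
  unfolding qv_def by (rule sum_nonneg) (use r valid_p[OF v _ c] in auto)

lemma qv_sum: assumes v: "valid_encoding n e"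
  shows "(\<Sum>c<dimC e. qv n r e c) = (\<Sum>x<n. r x)"
proof -
  have "(\<Sum>c<dimC e. qv n r e c) = (\<Sum>x<n. r x * (\<Sum>c<dimC e. pcond e x c))"
    unfolding qv_def by (simp add: sum_distrib_left) (rule sum.swap)
  also have "\<dots> = (\<Sum>x<n. r x)" using valid_sum[OF v] by simp
  finally show ?thesis .
qed

lemma valid_dimC: assumes v: "valid_encoding n e" and n: "n \<ge> 1" shows "dimC e \<ge> 1"
proof (rule ccontr)
  assume "\<not> dimC e \<ge> 1" then have "dimC e = 0" by simp
  then show False using valid_sum[OF v, of 0] n by simp
qed

lemma valid_dimB: assumes v: "valid_encoding n e" and n: "n \<ge> 1" shows "dimB e \<ge> 1"
proof (rule ccontr)
  assume "\<not> dimB e \<ge> 1" then have B0: "dimB e = 0" by simp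
  have "density (dimB e) (omega e 0 0)" by (rule valid_dens[OF v]) (use n valid_dimC[OF v n] in auto)
  then show False using B0 by (auto simp: density_def mtrace_def)
qed

definition mixB :: "nat \<Rightarrow> (nat \<Rightarrow> encoding) \<Rightarrow> nat" where
  "mixB K es = Max ((\<lambda>k. dimB (es k)) ` {..<K})"
definition mixC :: "nat \<Rightarrow> (nat \<Rightarrow> encoding) \<Rightarrow> nat" where
  "mixC K es = Max ((\<lambda>k. dimC (es k)) ` {..<K})"

definition mix :: "nat \<Rightarrow> (nat \<Rightarrow> real) \<Rightarrow> (nat \<Rightarrow> encoding) \<Rightarrow> encoding" where
  "mix K lam es = (| dimB = mixB K es, dimC = K * mixC K es,
    pcond = (\<lambda>x j. if j mod mixC K es < dimC (es (j div mixC K es))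
       then lam (j div mixC K es) * pcond (es (j div mixC K es)) x (j mod mixC K es) else 0),
    omega = (\<lambda>x j. if j mod mixC K es < dimC (es (j div mixC K es))
       then pad (mixB K es) (omega (es (j div mixC K es)) x (j mod mixC K es)) else proj (mixB K es) 0) |)"

lemma mix_simps: "dimB (mix K lam es) = mixB K es" "dimC (mix K lam es) = K * mixC K es"
  by (simp_all add: mix_def)

locale mixl =
  fixes n K :: nat and r lam :: "nat \<Rightarrow> real" and es :: "nat \<Rightarrow> encoding"
  assumes n1: "n \<ge> 1" and K1: "K \<ge> 1" and rnn: "\<And>x. x < n \<Longrightarrow> r x \<ge> 0" and rs: "(\<Sum>x<n. r x) = 1"
    and lnn: "\<And>k. k < K \<Longrightarrow> lam k \<ge> 0" and ls: "(\<Sum>k<K. lam k) = 1"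
    and ves: "\<And>k. k < K \<Longrightarrow> valid_encoding n (es k)"

context mixl
begin

lemma Cle: "k < K \<Longrightarrow> dimC (es k) \<le> mixC K es"
  unfolding mixC_def by (rule Max_ge) auto

lemma Ble: "k < K \<Longrightarrow> dimB (es k) \<le> mixB K es"
  unfolding mixB_def by (rule Max_ge) auto

lemma Bm1: "mixB K es \<ge> 1"
  using Ble[of 0] valid_dimB[OF ves[of 0] n1] K1 by simp

lemma p_at: assumes k: "k < K" and c: "c < mixC K es"
  shows "pcond (mix K lam es) x (k * mixC K es + c) = (if c < dimC (es k) then lam k * pcond (es k) x c else 0)"
  unfolding mix_def using dm_div[OF c, of k] dm_mod[OF c, of k] by simp

lemma om_at: assumes k: "k < K" and c: "c < mixC K es"
  shows "omega (mix K lam es) x (k * mixC K es + c) = (if c < dimC (es k) then pad (mixB K es) (omega (es k) x c) else proj (mixB K es) 0)"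
  unfolding mix_def using dm_div[OF c, of k] dm_mod[OF c, of k] by simp

lemma split_mix: "(\<Sum>j<dimC (mix K lam es). g j) = (\<Sum>k<K. \<Sum>c<mixC K es. g (k * mixC K es + c))"
  unfolding mix_simps by (rule sum_split)

lemma valid_mix: "valid_encoding n (mix K lam es)"
  unfolding valid_encoding_def
proof (intro allI impI conjI)
  fix x j assume x: "x < n" and j: "j < dimC (mix K lam es)"
  let ?Cm = "mixC K es"
  have Cm: "?Cm > 0" using j by (cases ?Cm) (auto simp: mix_simps)
  define k where "k = j div ?Cm"
  define c where "c = j mod ?Cm"
  have k: "k < K" using j Cm unfolding k_def mix_simps by (simp add: less_mult_imp_div_less mult.commute)
  have c: "c < ?Cm" using Cm unfolding c_def by simp
  have jkc: "j = k * ?Cm + c" unfolding k_def c_def by (metis div_mult_mod_eq)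
  show "pcond (mix K lam es) x j \<ge> 0"
    unfolding jkc p_at[OF k c] using lnn[OF k] valid_p[OF ves[OF k] x] by auto
  show "density (dimB (mix K lam es)) (omega (mix K lam es) x j)"
    unfolding jkc om_at[OF k c] mix_simps
    using density_pad[OF valid_dens[OF ves[OF k] x] Ble[OF k]] density_proj[OF Bm1] by auto
next
  fix x assume x: "x < n"
  have "(\<Sum>j<dimC (mix K lam es). pcond (mix K lam es) x j) = (\<Sum>k<K. \<Sum>c<mixC K es. if c < dimC (es k) then lam k * pcond (es k) x c else 0)"
    unfolding split_mix by (intro sum.cong refl) (simp add: p_at)
  also have "\<dots> = (\<Sum>k<K. lam k * (\<Sum>c<dimC (es k). pcond (es k) x c))"
    by (intro sum.cong refl) (simp add: sum_if_lt[OF Cle] sum_distrib_left)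
  also have "\<dots> = 1" using valid_sum[OF ves x] ls by simp
  finally show "(\<Sum>j<dimC (mix K lam es). pcond (mix K lam es) x j) = 1" .
qed

end

lemma eta_zero[simp]: "eta 0 = 0" by (simp add: eta_def)

lemma vn_zero_mat: "vn_entropy (0\<^sub>m m m) = 0"
  by (subst vn_diag[of _ m]) auto

context mixl
begin

abbreviation "E' \<equiv> mix K lam es"
abbreviation "Cm \<equiv> mixC K es"
abbreviation "Bm \<equiv> mixB K es"

lemma qv_at: assumes k: "k < K" and c: "c < Cm"
  shows "qv n r E' (k * Cm + c) = (if c < dimC (es k) then lam k * qv n r (es k) c else 0)"
  unfolding qv_def p_at[OF k c] by (simp add: sum_distrib_left ac_simps)

lemma Wm_at: assumes k: "k < K" and c: "c < Cm"
  shows "Wm n r E' (k * Cm + c) = (if c < dimC (es k) then complex_of_real (lam k) \<cdot>\<^sub>m pad Bm (Wm n r (es k) c) else 0\<^sub>m Bm Bm)"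
proof (rule eq_matI)
  show "dim_row (Wm n r E' (k * Cm + c)) = dim_row (if c < dimC (es k) then complex_of_real (lam k) \<cdot>\<^sub>m pad Bm (Wm n r (es k) c) else 0\<^sub>m Bm Bm)"
    by (simp add: Wm_def mix_simps pad_def)
  show "dim_col (Wm n r E' (k * Cm + c)) = dim_col (if c < dimC (es k) then complex_of_real (lam k) \<cdot>\<^sub>m pad Bm (Wm n r (es k) c) else 0\<^sub>m Bm Bm)"
    by (simp add: Wm_def mix_simps pad_def)
  fix b b' assume "b < dim_row (if c < dimC (es k) then complex_of_real (lam k) \<cdot>\<^sub>m pad Bm (Wm n r (es k) c) else 0\<^sub>m Bm Bm)"
    "b' < dim_col (if c < dimC (es k) then complex_of_real (lam k) \<cdot>\<^sub>m pad Bm (Wm n r (es k) c) else 0\<^sub>m Bm Bm)"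
  then have b: "b < Bm" "b' < Bm" by (cases "c < dimC (es k)"; simp add: pad_def)+
  have L: "Wm n r E' (k * Cm + c) $$ (b,b') = (\<Sum>x<n. complex_of_real (r x * pcond E' x (k * Cm + c)) * omega E' x (k * Cm + c) $$ (b,b'))"
    unfolding Wm_def mix_simps using b by simp
  show "Wm n r E' (k * Cm + c) $$ (b,b') = (if c < dimC (es k) then complex_of_real (lam k) \<cdot>\<^sub>m pad Bm (Wm n r (es k) c) else 0\<^sub>m Bm Bm) $$ (b,b')"
  proof (cases "c < dimC (es k)")
    case True
    have om: "\<And>x. x < n \<Longrightarrow> dim_row (omega (es k) x c) = dimB (es k) \<and> dim_col (omega (es k) x c) = dimB (es k)"
      using valid_om[OF ves[OF k] _ True] by auto
    have "Wm n r E' (k * Cm + c) $$ (b,b') = (\<Sum>x<n. complex_of_real (r x * (lam k * pcond (es k) x c)) * (if b < dimB (es k) \<and> b' < dimB (es k) then omega (es k) x c $$ (b,b') else 0))"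
      unfolding L p_at[OF k c] om_at[OF k c] using True b om by (intro sum.cong refl) (simp add: pad_index)
    also have "\<dots> = (complex_of_real (lam k) \<cdot>\<^sub>m pad Bm (Wm n r (es k) c)) $$ (b,b')"
      using b True by (auto simp: pad_index pad_def Wm_def sum_distrib_left ac_simps)
    finally show ?thesis using True by simp
  next
    case False
    show ?thesis unfolding L p_at[OF k c] using False b by simp
  qed
qed

lemma L1: "(\<Sum>j<dimC E'. eta (qv n r E' j)) = (\<Sum>k<K. lam k * (\<Sum>c<dimC (es k). eta (qv n r (es k) c))) + (\<Sum>k<K. eta (lam k))"
proof -
  have "(\<Sum>j<dimC E'. eta (qv n r E' j)) = (\<Sum>k<K. \<Sum>c<Cm. if c < dimC (es k) then eta (lam k * qv n r (es k) c) else 0)"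
    unfolding split_mix by (intro sum.cong refl) (simp add: qv_at)
  also have "\<dots> = (\<Sum>k<K. \<Sum>c<dimC (es k). lam k * eta (qv n r (es k) c) + qv n r (es k) c * eta (lam k))"
  proof (rule sum.cong[OF refl])
    fix k assume "k \<in> {..<K}" then have k: "k < K" by simp
    show "(\<Sum>c<Cm. if c < dimC (es k) then eta (lam k * qv n r (es k) c) else 0) =
      (\<Sum>c<dimC (es k). lam k * eta (qv n r (es k) c) + qv n r (es k) c * eta (lam k))"
      unfolding sum_if_lt[OF Cle[OF k]]
      by (rule sum.cong[OF refl]) (rule eta_mult[OF lnn[OF k] qv_nonneg[OF ves[OF k] rnn]]; simp)
  qed
  also have "\<dots> = (\<Sum>k<K. lam k * (\<Sum>c<dimC (es k). eta (qv n r (es k) c)) + eta (lam k) * (\<Sum>c<dimC (es k). qv n r (es k) c))"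
    by (simp add: sum.distrib sum_distrib_left sum_distrib_right ac_simps)
  also have "\<dots> = (\<Sum>k<K. lam k * (\<Sum>c<dimC (es k). eta (qv n r (es k) c)) + eta (lam k))"
    by (rule sum.cong[OF refl]) (simp add: qv_sum[OF ves] rs)
  finally show ?thesis by (simp add: sum.distrib)
qed

lemma L2: "(\<Sum>x<n. \<Sum>j<dimC E'. eta (r x * pcond E' x j)) =
   (\<Sum>k<K. lam k * (\<Sum>x<n. \<Sum>c<dimC (es k). eta (r x * pcond (es k) x c))) + (\<Sum>k<K. eta (lam k))"
proof -
  have "(\<Sum>x<n. \<Sum>j<dimC E'. eta (r x * pcond E' x j)) =
     (\<Sum>x<n. \<Sum>k<K. \<Sum>c<dimC (es k). lam k * eta (r x * pcond (es k) x c) + r x * pcond (es k) x c * eta (lam k))"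
  proof (rule sum.cong[OF refl])
    fix x assume "x \<in> {..<n}" then have x: "x < n" by simp
    have "(\<Sum>j<dimC E'. eta (r x * pcond E' x j)) = (\<Sum>k<K. \<Sum>c<Cm. if c < dimC (es k) then eta (lam k * (r x * pcond (es k) x c)) else 0)"
      unfolding split_mix
    proof (intro sum.cong refl)
      fix k c assume "k \<in> {..<K}" "c \<in> {..<Cm}"
      then have k: "k < K" and c: "c < Cm" by auto
      show "eta (r x * pcond E' x (k * Cm + c)) = (if c < dimC (es k) then eta (lam k * (r x * pcond (es k) x c)) else 0)"
        unfolding p_at[OF k c] by (simp add: ac_simps)
    qed
    also have "\<dots> = (\<Sum>k<K. \<Sum>c<dimC (es k). lam k * eta (r x * pcond (es k) x c) + r x * pcond (es k) x c * eta (lam k))"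
    proof (rule sum.cong[OF refl])
      fix k assume "k \<in> {..<K}" then have k: "k < K" by simp
      show "(\<Sum>c<Cm. if c < dimC (es k) then eta (lam k * (r x * pcond (es k) x c)) else 0) =
        (\<Sum>c<dimC (es k). lam k * eta (r x * pcond (es k) x c) + r x * pcond (es k) x c * eta (lam k))"
        unfolding sum_if_lt[OF Cle[OF k]]
        by (rule sum.cong[OF refl]) (rule eta_mult[OF lnn[OF k]]; use rnn[OF x] valid_p[OF ves[OF k] x] in simp)
    qed
    finally show "(\<Sum>j<dimC E'. eta (r x * pcond E' x j)) = (\<Sum>k<K. \<Sum>c<dimC (es k). lam k * eta (r x * pcond (es k) x c) + r x * pcond (es k) x c * eta (lam k))" .
  qed
  also have "\<dots> = (\<Sum>k<K. \<Sum>x<n. \<Sum>c<dimC (es k). lam k * eta (r x * pcond (es k) x c) + r x * pcond (es k) x c * eta (lam k))"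
    by (rule sum.swap)
  also have "\<dots> = (\<Sum>k<K. lam k * (\<Sum>x<n. \<Sum>c<dimC (es k). eta (r x * pcond (es k) x c)) + eta (lam k) * (\<Sum>x<n. r x * (\<Sum>c<dimC (es k). pcond (es k) x c)))"
    by (simp add: sum.distrib sum_distrib_left sum_distrib_right ac_simps)
  also have "\<dots> = (\<Sum>k<K. lam k * (\<Sum>x<n. \<Sum>c<dimC (es k). eta (r x * pcond (es k) x c)) + eta (lam k))"
    by (rule sum.cong[OF refl]) (simp add: valid_sum[OF ves] rs)
  finally show ?thesis by (simp add: sum.distrib)
qed

lemma mutual_mix: "mutual_AC n r E' = (\<Sum>k<K. lam k * mutual_AC n r (es k))"
proof -
  have "mutual_AC n r E' = - (\<Sum>x<n. eta (r x)) - (\<Sum>k<K. lam k * (\<Sum>c<dimC (es k). eta (qv n r (es k) c)))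
      + (\<Sum>k<K. lam k * (\<Sum>x<n. \<Sum>c<dimC (es k). eta (r x * pcond (es k) x c)))"
    unfolding mutual_formula[OF valid_mix] L1 L2 by simp
  also have "\<dots> = (\<Sum>k<K. lam k * (- (\<Sum>x<n. eta (r x)) - (\<Sum>c<dimC (es k). eta (qv n r (es k) c))
      + (\<Sum>x<n. \<Sum>c<dimC (es k). eta (r x * pcond (es k) x c))))"
    by (simp add: algebra_simps sum.distrib sum_subtractf flip: sum_distrib_right) (simp add: ls)
  also have "\<dots> = (\<Sum>k<K. lam k * mutual_AC n r (es k))"
    by (rule sum.cong[OF refl]) (simp add: mutual_formula[OF ves])
  finally show ?thesis .
qed

lemma L3: "(\<Sum>j<dimC E'. vn_entropy (Wm n r E' j) + eta (qv n r E' j)) =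
  (\<Sum>k<K. lam k * (\<Sum>c<dimC (es k). vn_entropy (Wm n r (es k) c) + eta (qv n r (es k) c)))"
proof -
  have "(\<Sum>j<dimC E'. vn_entropy (Wm n r E' j) + eta (qv n r E' j)) =
     (\<Sum>k<K. \<Sum>c<Cm. if c < dimC (es k) then lam k * (vn_entropy (Wm n r (es k) c) + eta (qv n r (es k) c)) else 0)"
    unfolding split_mix
  proof (intro sum.cong refl)
    fix k c assume "k \<in> {..<K}" "c \<in> {..<Cm}"
    then have k: "k < K" and c: "c < Cm" by auto
    show "vn_entropy (Wm n r E' (k * Cm + c)) + eta (qv n r E' (k * Cm + c)) =
      (if c < dimC (es k) then lam k * (vn_entropy (Wm n r (es k) c) + eta (qv n r (es k) c)) else 0)"
    proof (cases "c < dimC (es k)")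
      case True
      let ?W = "Wm n r (es k) c"
      have W: "?W \<in> carrier_mat (dimB (es k)) (dimB (es k))" by (rule Wm_carrier)
      have pW: "psd ?W" by (rule psd_Wm[OF ves[OF k] rnn True])
      have q: "qv n r (es k) c \<ge> 0" by (rule qv_nonneg[OF ves[OF k] rnn True])
      have "vn_entropy (complex_of_real (lam k) \<cdot>\<^sub>m pad Bm ?W) = lam k * vn_entropy (pad Bm ?W) - Re (mtrace (pad Bm ?W)) * eta (lam k)"
        by (rule vn_scale[OF pad_carrier psd_pad[OF W Ble[OF k] pW] lnn[OF k]])
      also have "\<dots> = lam k * vn_entropy ?W - qv n r (es k) c * eta (lam k)"
        by (simp add: vn_pad[OF W Ble[OF k]] mtrace_pad[OF W Ble[OF k]] mtrace_Wm[OF ves[OF k] True])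
      finally have v: "vn_entropy (complex_of_real (lam k) \<cdot>\<^sub>m pad Bm ?W) = lam k * vn_entropy ?W - qv n r (es k) c * eta (lam k)" .
      show ?thesis unfolding Wm_at[OF k c] qv_at[OF k c] using True v eta_mult[OF lnn[OF k] q]
        by (simp add: algebra_simps)
    next
      case False
      then show ?thesis unfolding Wm_at[OF k c] qv_at[OF k c] by (simp add: vn_zero_mat)
    qed
  qed
  also have "\<dots> = (\<Sum>k<K. lam k * (\<Sum>c<dimC (es k). vn_entropy (Wm n r (es k) c) + eta (qv n r (es k) c)))"
    by (rule sum.cong[OF refl]) (simp only: lessThan_iff sum_if_lt[OF Cle] sum_distrib_left)
  finally show ?thesis .
qed

lemma L4: "(\<Sum>x<n. \<Sum>j<dimC E'. r x * pcond E' x j * vn_entropy (omega E' x j)) =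
  (\<Sum>k<K. lam k * (\<Sum>x<n. \<Sum>c<dimC (es k). r x * pcond (es k) x c * vn_entropy (omega (es k) x c)))"
proof -
  have "(\<Sum>x<n. \<Sum>j<dimC E'. r x * pcond E' x j * vn_entropy (omega E' x j)) =
     (\<Sum>x<n. \<Sum>k<K. lam k * (\<Sum>c<dimC (es k). r x * pcond (es k) x c * vn_entropy (omega (es k) x c)))"
  proof (rule sum.cong[OF refl])
    fix x assume "x \<in> {..<n}" then have x: "x < n" by simp
    have "(\<Sum>j<dimC E'. r x * pcond E' x j * vn_entropy (omega E' x j)) =
      (\<Sum>k<K. \<Sum>c<Cm. if c < dimC (es k) then lam k * (r x * pcond (es k) x c * vn_entropy (omega (es k) x c)) else 0)"
      unfolding split_mix
    proof (intro sum.cong refl)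
      fix k c assume "k \<in> {..<K}" "c \<in> {..<Cm}"
      then have k: "k < K" and c: "c < Cm" by auto
      show "r x * pcond E' x (k * Cm + c) * vn_entropy (omega E' x (k * Cm + c)) =
        (if c < dimC (es k) then lam k * (r x * pcond (es k) x c * vn_entropy (omega (es k) x c)) else 0)"
        unfolding p_at[OF k c] om_at[OF k c]
        using vn_pad[OF valid_om[OF ves[OF k] x] Ble[OF k]] by (cases "c < dimC (es k)") simp_all
    qed
    also have "\<dots> = (\<Sum>k<K. lam k * (\<Sum>c<dimC (es k). r x * pcond (es k) x c * vn_entropy (omega (es k) x c)))"
      by (rule sum.cong[OF refl]) (simp only: lessThan_iff sum_if_lt[OF Cle] sum_distrib_left)
    finally show "(\<Sum>j<dimC E'. r x * pcond E' x j * vn_entropy (omega E' x j)) =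
      (\<Sum>k<K. lam k * (\<Sum>c<dimC (es k). r x * pcond (es k) x c * vn_entropy (omega (es k) x c)))" .
  qed
  also have "\<dots> = (\<Sum>k<K. \<Sum>x<n. lam k * (\<Sum>c<dimC (es k). r x * pcond (es k) x c * vn_entropy (omega (es k) x c)))"
    by (rule sum.swap)
  also have "\<dots> = (\<Sum>k<K. lam k * (\<Sum>x<n. \<Sum>c<dimC (es k). r x * pcond (es k) x c * vn_entropy (omega (es k) x c)))"
    by (simp add: sum_distrib_left)
  finally show ?thesis .
qed

lemma cmi_mix: "cmi_AB_C n r E' = (\<Sum>k<K. lam k * cmi_AB_C n r (es k))"
proof -
  have "cmi_AB_C n r E' = (\<Sum>k<K. lam k * (\<Sum>c<dimC (es k). vn_entropy (Wm n r (es k) c) + eta (qv n r (es k) c)))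
     - (\<Sum>k<K. lam k * (\<Sum>x<n. \<Sum>c<dimC (es k). r x * pcond (es k) x c * vn_entropy (omega (es k) x c)))"
    by (simp only: cmi_formula[OF valid_mix rnn] L3 L4)
  also have "\<dots> = (\<Sum>k<K. lam k * cmi_AB_C n r (es k))"
    by (simp add: cmi_formula[OF ves rnn] sum_subtractf right_diff_distrib)
  finally show ?thesis .
qed

end

lemma qform_add: assumes A: "A \<in> carrier_mat N N" and B: "B \<in> carrier_mat N N" and v: "v \<in> carrier_vec N"
  shows "qform (A + B) v = qform A v + qform B v"
proof -
  have "qform (A + B) v = (\<Sum>i<N. \<Sum>j<N. cnj (v $ i) * A $$ (i,j) * v $ j + cnj (v $ i) * B $$ (i,j) * v $ j)"
    unfolding qform_def using A B v by (intro sum.cong) (auto simp: distrib_left distrib_right)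
  also have "\<dots> = qform A v + qform B v"
    unfolding qform_def using v by (simp add: sum.distrib)
  finally show ?thesis .
qed

lemma psd_add: assumes A: "A \<in> carrier_mat N N" and B: "B \<in> carrier_mat N N" and pA: "psd A" and pB: "psd B"
  shows "psd (A + B)"
  unfolding psd_def
proof (intro conjI ballI)
  show "dim_col (A + B) = dim_row (A + B)" using A B by simp
  fix v :: "complex vec" assume "v \<in> carrier_vec (dim_row (A + B))"
  then have v: "v \<in> carrier_vec N" using A B by simp
  have "v \<in> carrier_vec (dim_row A)" "v \<in> carrier_vec (dim_row B)" using v A B by auto
  then have q: "Im (qform A v) = 0" "Re (qform A v) \<ge> 0" "Im (qform B v) = 0" "Re (qform B v) \<ge> 0"
    using pA pB unfolding psd_def by auto
  show "Im (qform (A + B) v) = 0" "Re (qform (A + B) v) \<ge> 0"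
    unfolding qform_add[OF A B v] using q by auto
qed

lemma msum_as_sum_mat: "msum N N f I = mat N N (\<lambda>(b,b'). \<Sum>k\<in>I. complex_of_real 1 * f k $$ (b,b'))"
  unfolding msum_def by (rule cong_mat) auto

lemma psd_msum: assumes f: "\<And>k. k \<in> I \<Longrightarrow> psd (f k) \<and> f k \<in> carrier_mat N N"
  shows "psd (msum N N f I)"
  unfolding msum_as_sum_mat by (rule psd_sum_mat) (use f in auto)

lemma qform_msum: assumes v: "v \<in> carrier_vec N"
  shows "qform (msum N N f I) v = (\<Sum>k\<in>I. qform (f k) v)"
  unfolding msum_as_sum_mat qform_sum_mat[OF v] by simp

lemma qform_smult: "qform (c \<cdot>\<^sub>m A) v = c * qform A v" if "A \<in> carrier_mat N N" "v \<in> carrier_vec N"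
  using that by (simp add: qform_def sum_distrib_left ac_simps)

lemma psd_sub: assumes X: "X \<in> carrier_mat N N" and pX: "psd X" and g: "\<And>i. i < p \<Longrightarrow> g i < N"
  and inj: "inj_on g {..<p}"
  shows "psd (mat p p (\<lambda>(i,j). X $$ (g i, g j)))"
  unfolding psd_def
proof (intro conjI ballI)
  show "dim_col (mat p p (\<lambda>(i,j). X $$ (g i, g j))) = dim_row (mat p p (\<lambda>(i,j). X $$ (g i, g j)))" by simp
  fix v :: "complex vec" assume "v \<in> carrier_vec (dim_row (mat p p (\<lambda>(i,j). X $$ (g i, g j))))"
  then have v: "v \<in> carrier_vec p" by simp
  define h where "h = inv_into {..<p} g"
  define w where "w = vec N (\<lambda>t. if t \<in> g ` {..<p} then v $ (h t) else 0)"
  have w: "w \<in> carrier_vec N" unfolding w_def by simp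
  have sub: "g ` {..<p} \<subseteq> {..<N}" using g by auto
  have wg: "\<And>i. i < p \<Longrightarrow> w $ (g i) = v $ i"
    unfolding w_def h_def using g inj by (simp add: inv_into_f_f)
  have z: "\<And>t. t < N \<Longrightarrow> t \<notin> g ` {..<p} \<Longrightarrow> w $ t = 0" unfolding w_def by simp
  have "qform X w = (\<Sum>t<N. \<Sum>t'<N. cnj (w $ t) * X $$ (t,t') * w $ t')"
    using w by (simp add: qform_def)
  also have "\<dots> = (\<Sum>t\<in>g ` {..<p}. \<Sum>t'<N. cnj (w $ t) * X $$ (t,t') * w $ t')"
    by (rule sum.mono_neutral_right) (use sub z in auto)
  also have "\<dots> = (\<Sum>t\<in>g ` {..<p}. \<Sum>t'\<in>g ` {..<p}. cnj (w $ t) * X $$ (t,t') * w $ t')"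
    by (rule sum.cong[OF refl], rule sum.mono_neutral_right) (use sub z in auto)
  also have "\<dots> = (\<Sum>i<p. \<Sum>j<p. cnj (w $ g i) * X $$ (g i, g j) * w $ g j)"
    by (simp add: sum.reindex[OF inj])
  also have "\<dots> = (\<Sum>i<p. \<Sum>j<p. cnj (v $ i) * X $$ (g i, g j) * v $ j)"
    by (intro sum.cong refl) (simp add: wg)
  also have "\<dots> = qform (mat p p (\<lambda>(i,j). X $$ (g i, g j))) v"
    using v by (simp add: qform_def)
  finally have q: "qform X w = qform (mat p p (\<lambda>(i,j). X $$ (g i, g j))) v" .
  have "w \<in> carrier_vec (dim_row X)" using w X by simp
  then show "Im (qform (mat p p (\<lambda>(i,j). X $$ (g i, g j))) v) = 0"
    "Re (qform (mat p p (\<lambda>(i,j). X $$ (g i, g j))) v) \<ge> 0"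
    using pX unfolding psd_def q[symmetric] by auto
qed

lemma psd_kron_proj: assumes S: "S \<in> carrier_mat m m" and pS: "psd S" and d: "d \<ge> 1"
  shows "psd (kron S (proj d 0))"
  unfolding psd_def
proof (intro conjI ballI)
  show "dim_col (kron S (proj d 0)) = dim_row (kron S (proj d 0))" using S by (simp add: kron_index)
  fix v :: "complex vec" assume "v \<in> carrier_vec (dim_row (kron S (proj d 0)))"
  then have v: "v \<in> carrier_vec (m*d)" using S by (simp add: kron_index)
  define w where "w = vec m (\<lambda>a. v $ (a*d))"
  have w: "w \<in> carrier_vec m" unfolding w_def by simp
  have d0: "0 \<in> {..<d}" using d by auto
  have ent: "kron S (proj d 0) $$ (a*d + t, a'*d + t') = S $$ (a,a') * (if t = 0 \<and> t' = 0 then 1 else 0)"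
    if "a < m" "a' < m" "t < d" "t' < d" for a a' t t'
    using kron_entry2[OF S proj_carrier that] that by simp
  have "qform (kron S (proj d 0)) v = (\<Sum>i<m*d. \<Sum>j<m*d. cnj (v $ i) * kron S (proj d 0) $$ (i,j) * v $ j)"
    using v by (simp add: qform_def)
  also have "\<dots> = (\<Sum>a<m. \<Sum>t<d. \<Sum>a'<m. \<Sum>t'<d. cnj (v $ (a*d+t)) * kron S (proj d 0) $$ (a*d+t, a'*d+t') * v $ (a'*d+t'))"
    by (simp only: sum_split)
  also have "\<dots> = (\<Sum>a<m. \<Sum>t<d. if t = 0 then (\<Sum>a'<m. cnj (w $ a) * S $$ (a,a') * w $ a') else 0)"
  proof (intro sum.cong refl)
    fix a t assume "a \<in> {..<m}" "t \<in> {..<d}"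
    then have a: "a < m" and t: "t < d" by auto
    show "(\<Sum>a'<m. \<Sum>t'<d. cnj (v $ (a*d+t)) * kron S (proj d 0) $$ (a*d+t, a'*d+t') * v $ (a'*d+t')) =
      (if t = 0 then (\<Sum>a'<m. cnj (w $ a) * S $$ (a,a') * w $ a') else 0)"
    proof (cases "t = 0")
      case True
      have "(\<Sum>a'<m. \<Sum>t'<d. cnj (v $ (a*d+t)) * kron S (proj d 0) $$ (a*d+t, a'*d+t') * v $ (a'*d+t')) =
        (\<Sum>a'<m. \<Sum>t'<d. if t' = 0 then cnj (w $ a) * S $$ (a,a') * w $ a' else 0)"
      proof (intro sum.cong refl)
        fix a' t' assume "a' \<in> {..<m}" "t' \<in> {..<d}"
        then have a': "a' < m" and t': "t' < d" by auto
        have e: "kron S (proj d 0) $$ (a*d+t, a'*d+t') = S $$ (a,a') * (if t = 0 \<and> t' = 0 then 1 else 0)"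
          by (rule ent[OF a a' t t'])
        show "cnj (v $ (a*d+t)) * kron S (proj d 0) $$ (a*d+t, a'*d+t') * v $ (a'*d+t') =
          (if t' = 0 then cnj (w $ a) * S $$ (a,a') * w $ a' else 0)"
          unfolding e using True a a' by (simp add: w_def)
      qed
      also have "\<dots> = (\<Sum>a'<m. cnj (w $ a) * S $$ (a,a') * w $ a')"
        by (rule sum.cong[OF refl]) (simp only: sum.delta[OF finite_lessThan] d0 if_True)
      finally show ?thesis using True by simp
    next
      case False
      have "\<And>a' t'. a' < m \<Longrightarrow> t' < d \<Longrightarrow> kron S (proj d 0) $$ (a*d+t, a'*d+t') = 0"
        using ent[OF a _ t] False by simp
      then show ?thesis using False by simp
    qed
  qed
  also have "\<dots> = (\<Sum>a<m. \<Sum>a'<m. cnj (w $ a) * S $$ (a,a') * w $ a')"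
    by (rule sum.cong[OF refl]) (simp only: sum.delta[OF finite_lessThan] d0 if_True)
  also have "\<dots> = qform S w" using w by (simp add: qform_def)
  finally have q: "qform (kron S (proj d 0)) v = qform S w" .
  have "w \<in> carrier_vec (dim_row S)" using w S by simp
  then show "Im (qform (kron S (proj d 0)) v) = 0" "Re (qform (kron S (proj d 0)) v) \<ge> 0"
    using pS unfolding psd_def q by auto
qed

lemma msum_carrier: "msum N M f I \<in> carrier_mat N M"
  unfolding msum_def by (rule mat_carrier)

lemma mtrace_proj: "d \<ge> 1 \<Longrightarrow> mtrace (proj d 0) = 1"
proof -
  assume d: "d \<ge> 1"
  have "mtrace (proj d 0) = (\<Sum>i<d. if i = 0 then 1 else 0)"
    by (simp only: mtrace_def proj_index(2)) (intro sum.cong refl, simp)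
  also have "\<dots> = 1" using d by simp
  finally show ?thesis .
qed

lemma cptp_facts: assumes "cptp n m D"
  shows "\<And>A. A \<in> carrier_mat n n \<Longrightarrow> D A \<in> carrier_mat m m"
    "\<And>A B. A \<in> carrier_mat n n \<Longrightarrow> B \<in> carrier_mat n n \<Longrightarrow> D (A + B) = D A + D B"
    "\<And>A c. A \<in> carrier_mat n n \<Longrightarrow> D (c \<cdot>\<^sub>m A) = c \<cdot>\<^sub>m D A"
    "\<And>A. A \<in> carrier_mat n n \<Longrightarrow> mtrace (D A) = mtrace A"
    "\<And>k X. X \<in> carrier_mat (k * n) (k * n) \<Longrightarrow> psd X \<Longrightarrow> psd (ampliate k n m D X)"
  using assms unfolding cptp_def by blast+

context mixl
begin

definition "nk k = dimB (es k) * dimC (es k)"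
definition "Np = Bm * (K * Cm)"
definition "fk k i = (i div dimC (es k)) * (K * Cm) + (k * Cm + i mod dimC (es k))"
definition "Sub k X = mat (nk k) (nk k) (\<lambda>(i,j). X $$ (fk k i, fk k j))"
definition "Rest = {..<Np} - (\<Union>k<K. fk k ` {..<nk k})"
definition "Dmix d Ds X = msum d d (\<lambda>k. Ds k (Sub k X)) {..<K} + (\<Sum>i\<in>Rest. X $$ (i,i)) \<cdot>\<^sub>m proj d 0"

lemma Np_eq: "dimB E' * dimC E' = Np" unfolding Np_def mix_simps ..

lemma fk_facts: assumes k: "k < K" and i: "i < nk k"
  shows "fk k i < Np" "fk k i div (K * Cm) = i div dimC (es k)" "fk k i mod (K * Cm) = k * Cm + i mod dimC (es k)"
    "(k * Cm + i mod dimC (es k)) div Cm = k" "(k * Cm + i mod dimC (es k)) mod Cm = i mod dimC (es k)"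
proof -
  have C: "dimC (es k) > 0" using i unfolding nk_def by (cases "dimC (es k)") auto
  have B: "i div dimC (es k) < dimB (es k)" using i unfolding nk_def by (simp add: less_mult_imp_div_less)
  have c: "i mod dimC (es k) < Cm" using C Cle[OF k] by (meson less_le_trans mod_less_divisor)
  have kc: "k * Cm + i mod dimC (es k) < K * Cm" by (rule decomp_lt[OF k c])
  have b: "i div dimC (es k) < Bm" using B Ble[OF k] by simp
  show "fk k i < Np" unfolding fk_def Np_def by (rule decomp_lt[OF b kc])
  show "fk k i div (K * Cm) = i div dimC (es k)" unfolding fk_def by (rule dm_div[OF kc])
  show "fk k i mod (K * Cm) = k * Cm + i mod dimC (es k)" unfolding fk_def by (rule dm_mod[OF kc])
  show "(k * Cm + i mod dimC (es k)) div Cm = k" by (rule dm_div[OF c])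
  show "(k * Cm + i mod dimC (es k)) mod Cm = i mod dimC (es k)" by (rule dm_mod[OF c])
qed

lemma fk_inj: assumes k: "k < K" shows "inj_on (fk k) {..<nk k}"
proof (rule inj_onI)
  fix i j assume i: "i \<in> {..<nk k}" and j: "j \<in> {..<nk k}" and e: "fk k i = fk k j"
  from i j have i': "i < nk k" and j': "j < nk k" by auto
  have "i div dimC (es k) = j div dimC (es k)" using fk_facts(2)[OF k i'] fk_facts(2)[OF k j'] e by simp
  moreover have "i mod dimC (es k) = j mod dimC (es k)"
    using fk_facts(3,5)[OF k i'] fk_facts(3,5)[OF k j'] e by metis
  ultimately show "i = j" by (metis div_mult_mod_eq)
qed

lemma fk_disj: assumes k: "k < K" and k': "k' < K" and i: "i < nk k" and j: "j < nk k'" and e: "fk k i = fk k' j"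
  shows "k = k'"
  using fk_facts(3,4)[OF k i] fk_facts(3,4)[OF k' j] e by metis

lemma trace_split: assumes A: "A \<in> carrier_mat Np Np"
  shows "(\<Sum>k<K. \<Sum>i<nk k. A $$ (fk k i, fk k i)) + (\<Sum>i\<in>Rest. A $$ (i,i)) = (\<Sum>i<Np. A $$ (i,i))"
proof -
  let ?U = "\<Union>k<K. fk k ` {..<nk k}"
  have sub: "?U \<subseteq> {..<Np}" using fk_facts(1) by auto
  have "(\<Sum>k<K. \<Sum>i<nk k. A $$ (fk k i, fk k i)) = (\<Sum>k<K. \<Sum>v\<in>fk k ` {..<nk k}. A $$ (v,v))"
    by (rule sum.cong[OF refl]) (simp add: sum.reindex[OF fk_inj])
  also have "\<dots> = (\<Sum>v\<in>?U. A $$ (v,v))"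
  proof (rule sum.UNION_disjoint[symmetric])
    show "\<forall>k\<in>{..<K}. \<forall>k'\<in>{..<K}. k \<noteq> k' \<longrightarrow> fk k ` {..<nk k} \<inter> fk k' ` {..<nk k'} = {}"
      using fk_disj by blast
  qed auto
  also have "\<dots> + (\<Sum>i\<in>Rest. A $$ (i,i)) = (\<Sum>i\<in>?U \<union> Rest. A $$ (i,i))"
    by (rule sum.union_disjoint[symmetric]) (auto simp: Rest_def)
  also have "?U \<union> Rest = {..<Np}" using sub by (auto simp: Rest_def)
  finally show ?thesis .
qed

lemma Sub_carrier: "Sub k X \<in> carrier_mat (nk k) (nk k)"
  unfolding Sub_def by (rule mat_carrier)

lemma Sub_add: assumes k: "k < K" and A: "A \<in> carrier_mat Np Np" and B: "B \<in> carrier_mat Np Np"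
  shows "Sub k (A + B) = Sub k A + Sub k B"
  by (rule eq_matI) (use A B fk_facts(1)[OF k] in \<open>auto simp: Sub_def\<close>)

lemma Sub_smult: assumes k: "k < K" and A: "A \<in> carrier_mat Np Np"
  shows "Sub k (c \<cdot>\<^sub>m A) = c \<cdot>\<^sub>m Sub k A"
  by (rule eq_matI) (use A fk_facts(1)[OF k] in \<open>auto simp: Sub_def\<close>)

lemma Dmix_carrier: "Dmix d Ds X \<in> carrier_mat d d"
  unfolding Dmix_def carrier_mat_def by simp

lemma Dmix_index: assumes i: "i < d" and j: "j < d"
  shows "Dmix d Ds X $$ (i,j) = (\<Sum>k<K. Ds k (Sub k X) $$ (i,j)) + (\<Sum>r\<in>Rest. X $$ (r,r)) * proj d 0 $$ (i,j)"
  unfolding Dmix_def using i j by simp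

lemma Dmix_dims: "dim_row (Dmix d Ds X) = d" "dim_col (Dmix d Ds X) = d"
  using Dmix_carrier[of d Ds X] by auto

lemma Dmix_lin: assumes cp: "\<And>k. k < K \<Longrightarrow> cptp (nk k) d (Ds k)"
  and A: "A \<in> carrier_mat Np Np" and B: "B \<in> carrier_mat Np Np"
  shows "Dmix d Ds (A + B) = Dmix d Ds A + Dmix d Ds B" "Dmix d Ds (c \<cdot>\<^sub>m A) = c \<cdot>\<^sub>m Dmix d Ds A"
proof -
  have DS: "\<And>k Y. k < K \<Longrightarrow> Ds k (Sub k Y) \<in> carrier_mat d d" using cptp_facts(1)[OF cp Sub_carrier] .
  have DSd: "\<And>k Y. k < K \<Longrightarrow> dim_row (Ds k (Sub k Y)) = d \<and> dim_col (Ds k (Sub k Y)) = d" using DS by auto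
  have RA: "(\<Sum>r\<in>Rest. (A + B) $$ (r,r)) = (\<Sum>r\<in>Rest. A $$ (r,r)) + (\<Sum>r\<in>Rest. B $$ (r,r))"
    by (subst sum.distrib[symmetric], rule sum.cong[OF refl]) (use A B in \<open>auto simp: Rest_def\<close>)
  have RC: "(\<Sum>r\<in>Rest. (c \<cdot>\<^sub>m A) $$ (r,r)) = c * (\<Sum>r\<in>Rest. A $$ (r,r))"
    by (subst sum_distrib_left, rule sum.cong[OF refl]) (use A in \<open>auto simp: Rest_def\<close>)
  show "Dmix d Ds (A + B) = Dmix d Ds A + Dmix d Ds B"
  proof (rule eq_matI)
    fix i j assume "i < dim_row (Dmix d Ds A + Dmix d Ds B)" "j < dim_col (Dmix d Ds A + Dmix d Ds B)"
    then have i: "i < d" and j: "j < d" by (simp_all add: Dmix_dims)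
    have e: "Ds k (Sub k (A + B)) $$ (i,j) = Ds k (Sub k A) $$ (i,j) + Ds k (Sub k B) $$ (i,j)" if k: "k < K" for k
    proof -
      have "Ds k (Sub k (A + B)) = Ds k (Sub k A) + Ds k (Sub k B)"
        unfolding Sub_add[OF k A B] by (rule cptp_facts(2)[OF cp[OF k] Sub_carrier Sub_carrier])
      then show ?thesis using DSd[OF k, of B] i j by simp
    qed
    have s1: "(\<Sum>k<K. Ds k (Sub k (A + B)) $$ (i,j)) = (\<Sum>k<K. Ds k (Sub k A) $$ (i,j)) + (\<Sum>k<K. Ds k (Sub k B) $$ (i,j))"
      by (subst sum.distrib[symmetric], rule sum.cong[OF refl]) (simp add: e)
    have "(Dmix d Ds A + Dmix d Ds B) $$ (i,j) = Dmix d Ds A $$ (i,j) + Dmix d Ds B $$ (i,j)"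
      by (rule index_add_mat(1)) (simp_all add: Dmix_dims i j)
    then show "Dmix d Ds (A + B) $$ (i,j) = (Dmix d Ds A + Dmix d Ds B) $$ (i,j)"
      by (simp only: Dmix_index[OF i j] s1 RA) (simp add: algebra_simps)
  qed (simp_all add: Dmix_dims)
  show "Dmix d Ds (c \<cdot>\<^sub>m A) = c \<cdot>\<^sub>m Dmix d Ds A"
  proof (rule eq_matI)
    fix i j assume "i < dim_row (c \<cdot>\<^sub>m Dmix d Ds A)" "j < dim_col (c \<cdot>\<^sub>m Dmix d Ds A)"
    then have i: "i < d" and j: "j < d" by (simp_all add: Dmix_dims)
    have e: "Ds k (Sub k (c \<cdot>\<^sub>m A)) $$ (i,j) = c * Ds k (Sub k A) $$ (i,j)" if k: "k < K" for k
    proof -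
      have "Ds k (Sub k (c \<cdot>\<^sub>m A)) = c \<cdot>\<^sub>m Ds k (Sub k A)"
        unfolding Sub_smult[OF k A] by (rule cptp_facts(3)[OF cp[OF k] Sub_carrier])
      then show ?thesis using DSd[OF k, of A] i j by simp
    qed
    have s1: "(\<Sum>k<K. Ds k (Sub k (c \<cdot>\<^sub>m A)) $$ (i,j)) = c * (\<Sum>k<K. Ds k (Sub k A) $$ (i,j))"
      by (subst sum_distrib_left, rule sum.cong[OF refl]) (simp add: e)
    have "(c \<cdot>\<^sub>m Dmix d Ds A) $$ (i,j) = c * Dmix d Ds A $$ (i,j)"
      by (rule index_smult_mat(1)) (simp_all add: Dmix_dims i j)
    then show "Dmix d Ds (c \<cdot>\<^sub>m A) $$ (i,j) = (c \<cdot>\<^sub>m Dmix d Ds A) $$ (i,j)"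
      by (simp only: Dmix_index[OF i j] s1 RC) (simp add: algebra_simps)
  qed (simp_all add: Dmix_dims)
qed

lemma Dmix_trace: assumes d: "d \<ge> 1" and cp: "\<And>k. k < K \<Longrightarrow> cptp (nk k) d (Ds k)"
  and A: "A \<in> carrier_mat Np Np"
  shows "mtrace (Dmix d Ds A) = mtrace A"
proof -
  have DS: "\<And>k. k < K \<Longrightarrow> Ds k (Sub k A) \<in> carrier_mat d d" using cptp_facts(1)[OF cp Sub_carrier] .
  have "mtrace (Dmix d Ds A) = (\<Sum>i<d. (\<Sum>k<K. Ds k (Sub k A) $$ (i,i)) + (\<Sum>r\<in>Rest. A $$ (r,r)) * proj d 0 $$ (i,i))"
    unfolding mtrace_def using Dmix_carrier[of d Ds A] by (simp add: Dmix_index)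
  also have "\<dots> = (\<Sum>i<d. \<Sum>k<K. Ds k (Sub k A) $$ (i,i)) + (\<Sum>r\<in>Rest. A $$ (r,r)) * (\<Sum>i<d. proj d 0 $$ (i,i))"
    by (simp only: sum.distrib sum_distrib_left)
  also have t1: "(\<Sum>i<d. \<Sum>k<K. Ds k (Sub k A) $$ (i,i)) = (\<Sum>k<K. mtrace (Sub k A))"
  proof (subst sum.swap, rule sum.cong[OF refl])
    fix k assume "k \<in> {..<K}"
    then have k: "k < K" by simp
    then have "dim_row (Ds k (Sub k A)) = d" using DS by auto
    then have "(\<Sum>i<d. Ds k (Sub k A) $$ (i,i)) = mtrace (Ds k (Sub k A))" unfolding mtrace_def by simp
    also have "\<dots> = mtrace (Sub k A)" by (rule cptp_facts(4)[OF cp[OF k] Sub_carrier])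
    finally show "(\<Sum>i<d. Ds k (Sub k A) $$ (i,i)) = mtrace (Sub k A)" .
  qed
  also have t2: "(\<Sum>i<d. proj d 0 $$ (i,i)) = 1" using mtrace_proj[OF d] by (simp add: mtrace_def)
  also have "(\<Sum>r\<in>Rest. A $$ (r,r)) * 1 = (\<Sum>r\<in>Rest. A $$ (r,r))" by simp
  also have "(\<Sum>k<K. mtrace (Sub k A)) = (\<Sum>k<K. \<Sum>i<nk k. A $$ (fk k i, fk k i))"
    by (rule sum.cong[OF refl]) (simp add: mtrace_def Sub_def)
  also have "\<dots> + (\<Sum>r\<in>Rest. A $$ (r,r)) = mtrace A"
    using trace_split[OF A] A by (simp add: mtrace_def)
  finally show ?thesis .
qed

end

context mixl
begin

definition "Xk m k X = mat (m * nk k) (m * nk k) (\<lambda>(s,t). X $$ ((s div nk k) * Np + fk k (s mod nk k), (t div nk k) * Np + fk k (t mod nk k)))"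
definition "Sm m X = mat m m (\<lambda>(a,a'). \<Sum>i\<in>Rest. X $$ (a*Np + i, a'*Np + i))"

lemma ampliate_Dmix:
  shows "ampliate m Np d (Dmix d Ds) X = msum (m*d) (m*d) (\<lambda>k. ampliate m (nk k) d (Ds k) (Xk m k X)) {..<K} + kron (Sm m X) (proj d 0)"
proof (rule eq_matI)
  show "dim_row (ampliate m Np d (Dmix d Ds) X) = dim_row (msum (m*d) (m*d) (\<lambda>k. ampliate m (nk k) d (Ds k) (Xk m k X)) {..<K} + kron (Sm m X) (proj d 0))"
    by (simp add: ampliate_def kron_index Sm_def)
  show "dim_col (ampliate m Np d (Dmix d Ds) X) = dim_col (msum (m*d) (m*d) (\<lambda>k. ampliate m (nk k) d (Ds k) (Xk m k X)) {..<K} + kron (Sm m X) (proj d 0))"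
    by (simp add: ampliate_def kron_index Sm_def)
  fix i j assume "i < dim_row (msum (m*d) (m*d) (\<lambda>k. ampliate m (nk k) d (Ds k) (Xk m k X)) {..<K} + kron (Sm m X) (proj d 0))"
    "j < dim_col (msum (m*d) (m*d) (\<lambda>k. ampliate m (nk k) d (Ds k) (Xk m k X)) {..<K} + kron (Sm m X) (proj d 0))"
  then have i: "i < m*d" and j: "j < m*d" by (simp_all add: kron_index Sm_def)
  have d: "d > 0" using i by (cases d) auto
  have id: "i div d < m" "j div d < m" "i mod d < d" "j mod d < d" using i j d
    by (auto simp: less_mult_imp_div_less)
  define blk where "blk = mat Np Np (\<lambda>(p,q). X $$ ((i div d)*Np + p, (j div d)*Np + q))"
  have L: "ampliate m Np d (Dmix d Ds) X $$ (i,j) = Dmix d Ds blk $$ (i mod d, j mod d)"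
    unfolding ampliate_def blk_def using i j by simp
  also have "\<dots> = (\<Sum>k<K. Ds k (Sub k blk) $$ (i mod d, j mod d)) + (\<Sum>r\<in>Rest. blk $$ (r,r)) * proj d 0 $$ (i mod d, j mod d)"
    by (rule Dmix_index[OF id(3,4)])
  also have "(\<Sum>k<K. Ds k (Sub k blk) $$ (i mod d, j mod d)) = (\<Sum>k<K. ampliate m (nk k) d (Ds k) (Xk m k X) $$ (i,j))"
  proof (rule sum.cong[OF refl])
    fix k assume "k \<in> {..<K}"
    then have k: "k < K" by simp
    have "Sub k blk = mat (nk k) (nk k) (\<lambda>(p,q). Xk m k X $$ ((i div d) * nk k + p, (j div d) * nk k + q))"
    proof (rule eq_matI)
      fix p q assume "p < dim_row (mat (nk k) (nk k) (\<lambda>(p,q). Xk m k X $$ ((i div d) * nk k + p, (j div d) * nk k + q)))"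
        "q < dim_col (mat (nk k) (nk k) (\<lambda>(p,q). Xk m k X $$ ((i div d) * nk k + p, (j div d) * nk k + q)))"
      then have p: "p < nk k" and q: "q < nk k" by auto
      have ip: "(i div d) * nk k + p < m * nk k" "(j div d) * nk k + q < m * nk k"
        using decomp_lt[OF id(1) p] decomp_lt[OF id(2) q] by auto
      have "Xk m k X $$ ((i div d) * nk k + p, (j div d) * nk k + q) = X $$ ((i div d) * Np + fk k p, (j div d) * Np + fk k q)"
        unfolding Xk_def using ip p q by (simp add: dm_div[OF p] dm_mod[OF p] dm_div[OF q] dm_mod[OF q])
      moreover have "Sub k blk $$ (p,q) = X $$ ((i div d) * Np + fk k p, (j div d) * Np + fk k q)"
        unfolding Sub_def blk_def using p q fk_facts(1)[OF k p] fk_facts(1)[OF k q] by simp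
      ultimately show "Sub k blk $$ (p,q) = mat (nk k) (nk k) (\<lambda>(p,q). Xk m k X $$ ((i div d) * nk k + p, (j div d) * nk k + q)) $$ (p,q)"
        using p q by simp
    qed (simp_all add: Sub_def)
    moreover have "ampliate m (nk k) d (Ds k) (Xk m k X) $$ (i,j) = Ds k (mat (nk k) (nk k) (\<lambda>(p,q). Xk m k X $$ ((i div d) * nk k + p, (j div d) * nk k + q))) $$ (i mod d, j mod d)"
      by (simp only: ampliate_def index_mat(1)[OF i j] case_prod_conv)
    ultimately show "Ds k (Sub k blk) $$ (i mod d, j mod d) = ampliate m (nk k) d (Ds k) (Xk m k X) $$ (i,j)"
      by simp
  qed
  also have "(\<Sum>r\<in>Rest. blk $$ (r,r)) * proj d 0 $$ (i mod d, j mod d) = kron (Sm m X) (proj d 0) $$ (i,j)"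
  proof -
    have RNp: "\<And>r. r \<in> Rest \<Longrightarrow> r < Np" by (simp add: Rest_def)
    have "(\<Sum>r\<in>Rest. blk $$ (r,r)) = (\<Sum>r\<in>Rest. X $$ ((i div d)*Np + r, (j div d)*Np + r))"
      by (rule sum.cong[OF refl]) (simp add: blk_def RNp)
    also have "\<dots> = Sm m X $$ (i div d, j div d)"
      by (simp only: Sm_def index_mat(1)[OF id(1) id(2)] case_prod_conv)
    finally have "(\<Sum>r\<in>Rest. blk $$ (r,r)) = Sm m X $$ (i div d, j div d)" .
    moreover have "kron (Sm m X) (proj d 0) $$ (i,j) = Sm m X $$ (i div d, j div d) * proj d 0 $$ (i mod d, j mod d)"
    proof -
      have sd: "dim_row (Sm m X) = m" "dim_col (Sm m X) = m" by (simp_all add: Sm_def)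
      show ?thesis using kron_index(1)[of i "Sm m X" "proj d 0" j] i j by (simp only: sd proj_index(2,3))
    qed
    ultimately show ?thesis by simp
  qed
  also have "(\<Sum>k<K. ampliate m (nk k) d (Ds k) (Xk m k X) $$ (i,j)) + kron (Sm m X) (proj d 0) $$ (i,j)
     = (msum (m*d) (m*d) (\<lambda>k. ampliate m (nk k) d (Ds k) (Xk m k X)) {..<K} + kron (Sm m X) (proj d 0)) $$ (i,j)"
  proof -
    have kd: "dim_row (kron (Sm m X) (proj d 0)) = m*d" "dim_col (kron (Sm m X) (proj d 0)) = m*d"
      by (simp_all add: kron_index(2,3) Sm_def)
    have "(msum (m*d) (m*d) (\<lambda>k. ampliate m (nk k) d (Ds k) (Xk m k X)) {..<K} + kron (Sm m X) (proj d 0)) $$ (i,j)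
      = msum (m*d) (m*d) (\<lambda>k. ampliate m (nk k) d (Ds k) (Xk m k X)) {..<K} $$ (i,j) + kron (Sm m X) (proj d 0) $$ (i,j)"
      by (rule index_add_mat(1)) (simp_all only: kd i j)
    then show ?thesis using i j by (simp only: msum_index(1))
  qed
  finally show "ampliate m Np d (Dmix d Ds) X $$ (i,j) = (msum (m*d) (m*d) (\<lambda>k. ampliate m (nk k) d (Ds k) (Xk m k X)) {..<K} + kron (Sm m X) (proj d 0)) $$ (i,j)" .
qed

lemma nk_pos: "k < K \<Longrightarrow> i < nk k \<Longrightarrow> nk k > 0" by auto

lemma psd_Xk: assumes k: "k < K" and X: "X \<in> carrier_mat (m * Np) (m * Np)" and pX: "psd X"
  shows "psd (Xk m k X)"
proof -
  define g where "g = (\<lambda>s. (s div nk k) * Np + fk k (s mod nk k))"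
  have gb: "g s < m * Np" if s: "s < m * nk k" for s
  proof -
    have n0: "nk k > 0" using s by (cases "nk k") auto
    have "s div nk k < m" using s by (simp add: less_mult_imp_div_less)
    moreover have "fk k (s mod nk k) < Np" using fk_facts(1)[OF k] n0 by simp
    ultimately show ?thesis unfolding g_def by (rule decomp_lt)
  qed
  have gd: "g s div Np = s div nk k \<and> g s mod Np = fk k (s mod nk k)" if s: "s < m * nk k" for s
  proof -
    have n0: "nk k > 0" using s by (cases "nk k") auto
    have "fk k (s mod nk k) < Np" using fk_facts(1)[OF k] n0 by simp
    then show ?thesis unfolding g_def by simp
  qed
  have inj: "inj_on g {..<m * nk k}"
  proof (rule inj_onI)
    fix s t assume s: "s \<in> {..<m * nk k}" and t: "t \<in> {..<m * nk k}" and e: "g s = g t"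
    have n0: "nk k > 0" using s by (cases "nk k") auto
    have "s div nk k = t div nk k" using gd[of s] gd[of t] s t e by auto
    moreover have "fk k (s mod nk k) = fk k (t mod nk k)" using gd[of s] gd[of t] s t e by auto
    then have "s mod nk k = t mod nk k" using inj_onD[OF fk_inj[OF k]] n0 by simp
    ultimately show "s = t" by (metis div_mult_mod_eq)
  qed
  have "Xk m k X = mat (m * nk k) (m * nk k) (\<lambda>(s,t). X $$ (g s, g t))" unfolding Xk_def g_def ..
  also have "psd \<dots>" by (rule psd_sub[OF X pX gb inj])
  finally show ?thesis .
qed

lemma psd_Sm: assumes X: "X \<in> carrier_mat (m * Np) (m * Np)" and pX: "psd X"
  shows "psd (Sm m X)"
proof -
  have RNp: "\<And>r. r \<in> Rest \<Longrightarrow> r < Np" by (simp add: Rest_def)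
  have "Sm m X = msum m m (\<lambda>r. mat m m (\<lambda>(a,a'). X $$ (a*Np + r, a'*Np + r))) Rest"
    by (rule eq_matI) (auto simp: Sm_def msum_def)
  also have "psd \<dots>"
  proof (rule psd_msum)
    fix r assume r: "r \<in> Rest"
    have gb: "\<And>a. a < m \<Longrightarrow> a * Np + r < m * Np" using RNp[OF r] decomp_lt by blast
    have inj: "inj_on (\<lambda>a. a * Np + r) {..<m}"
      by (rule inj_onI) (use RNp[OF r] in \<open>metis dm_div\<close>)
    show "psd (mat m m (\<lambda>(a,a'). X $$ (a*Np + r, a'*Np + r))) \<and> mat m m (\<lambda>(a,a'). X $$ (a*Np + r, a'*Np + r)) \<in> carrier_mat m m"
      using psd_sub[OF X pX gb inj] by simp
  qed
  finally show ?thesis .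
qed

lemma cptp_Dmix: assumes d: "d \<ge> 1" and cp: "\<And>k. k < K \<Longrightarrow> cptp (nk k) d (Ds k)"
  shows "cptp Np d (Dmix d Ds)"
  unfolding cptp_def
proof (intro conjI ballI allI impI)
  show "\<And>A. Dmix d Ds A \<in> carrier_mat d d" by (rule Dmix_carrier)
  show "\<And>A B. A \<in> carrier_mat Np Np \<Longrightarrow> B \<in> carrier_mat Np Np \<Longrightarrow> Dmix d Ds (A + B) = Dmix d Ds A + Dmix d Ds B"
    using Dmix_lin(1)[OF cp] by blast
  show "\<And>A c. A \<in> carrier_mat Np Np \<Longrightarrow> Dmix d Ds (c \<cdot>\<^sub>m A) = c \<cdot>\<^sub>m Dmix d Ds A"
    using Dmix_lin(2)[OF cp] by blast
  show "\<And>A. A \<in> carrier_mat Np Np \<Longrightarrow> mtrace (Dmix d Ds A) = mtrace A"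
    using Dmix_trace[OF d cp] by blast
  fix m X assume X: "X \<in> carrier_mat (m * Np) (m * Np)" and pX: "psd X"
  have amp_c: "\<And>k. ampliate m (nk k) d (Ds k) (Xk m k X) \<in> carrier_mat (m*d) (m*d)"
    unfolding ampliate_def by (rule mat_carrier)
  have Smc: "Sm m X \<in> carrier_mat m m" unfolding Sm_def by (rule mat_carrier)
  have kc: "kron (Sm m X) (proj d 0) \<in> carrier_mat (m*d) (m*d)"
    using Smc unfolding carrier_mat_def by (simp add: kron_index(2,3))
  have p1: "psd (msum (m*d) (m*d) (\<lambda>k. ampliate m (nk k) d (Ds k) (Xk m k X)) {..<K})"
  proof (rule psd_msum)
    fix k assume "k \<in> {..<K}" then have k: "k < K" by simp
    have "Xk m k X \<in> carrier_mat (m * nk k) (m * nk k)" unfolding Xk_def by (rule mat_carrier)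
    then show "psd (ampliate m (nk k) d (Ds k) (Xk m k X)) \<and> ampliate m (nk k) d (Ds k) (Xk m k X) \<in> carrier_mat (m*d) (m*d)"
      using cptp_facts(5)[OF cp[OF k] _ psd_Xk[OF k X pX]] amp_c by blast
  qed
  have p2: "psd (kron (Sm m X) (proj d 0))" by (rule psd_kron_proj[OF Smc psd_Sm[OF X pX] d])
  show "psd (ampliate m Np d (Dmix d Ds) X)"
    unfolding ampliate_Dmix by (rule psd_add[OF msum_carrier kc p1 p2])
qed

end

context mixl
begin

lemma enc_mix_entry: assumes x: "x < n" and b: "b < Bm" "b' < Bm" and k: "k < K" "k' < K" and c: "c < Cm" "c' < Cm"
  shows "enc_state E' x $$ (b * (K * Cm) + (k * Cm + c), b' * (K * Cm) + (k' * Cm + c')) =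
    (if k = k' \<and> c = c' \<and> c < dimC (es k) then complex_of_real (lam k * pcond (es k) x c) * pad Bm (omega (es k) x c) $$ (b,b') else 0)"
proof -
  have j: "k * Cm + c < K * Cm" "k' * Cm + c' < K * Cm" using decomp_lt k c by auto
  have eqj: "(k * Cm + c = k' * Cm + c') = (k = k' \<and> c = c')"
    using dm_div[OF c(1), of k] dm_div[OF c(2), of k'] dm_mod[OF c(1), of k] dm_mod[OF c(2), of k'] by metis
  have "enc_state E' x $$ (b * dimC E' + (k * Cm + c), b' * dimC E' + (k' * Cm + c')) =
      (if k * Cm + c = k' * Cm + c' then complex_of_real (pcond E' x (k * Cm + c)) * omega E' x (k * Cm + c) $$ (b,b') else 0)"
    by (rule enc_entry[OF valid_mix x]) (use b j in \<open>simp_all add: mix_simps\<close>)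
  then show ?thesis unfolding eqj mix_simps p_at[OF k(1) c(1)] om_at[OF k(1) c(1)] by auto
qed

lemma Sub_enc: assumes k: "k < K" and x: "x < n"
  shows "Sub k (enc_state E' x) = complex_of_real (lam k) \<cdot>\<^sub>m enc_state (es k) x"
proof (rule eq_matI)
  fix p q assume "p < dim_row (complex_of_real (lam k) \<cdot>\<^sub>m enc_state (es k) x)" "q < dim_col (complex_of_real (lam k) \<cdot>\<^sub>m enc_state (es k) x)"
  then have p: "p < nk k" and q: "q < nk k" using enc_carrier[of "es k" x] by (auto simp: nk_def)
  let ?C = "dimC (es k)" let ?B = "dimB (es k)"
  have C: "?C > 0" using p unfolding nk_def by (cases ?C) auto
  have bp: "p div ?C < ?B" "q div ?C < ?B" using p q unfolding nk_def by (simp_all add: less_mult_imp_div_less)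
  have cp: "p mod ?C < ?C" "q mod ?C < ?C" using C by auto
  have bm: "p div ?C < Bm" "q div ?C < Bm" using bp Ble[OF k] by auto
  have cm: "p mod ?C < Cm" "q mod ?C < Cm" using cp(1) cp(2) Cle[OF k] by linarith+
  have om: "\<And>c. c < ?C \<Longrightarrow> dim_row (omega (es k) x c) = ?B \<and> dim_col (omega (es k) x c) = ?B"
    using valid_om[OF ves[OF k] x] by auto
  have L: "Sub k (enc_state E' x) $$ (p,q) = (if p mod ?C = q mod ?C then complex_of_real (lam k * pcond (es k) x (p mod ?C)) * omega (es k) x (p mod ?C) $$ (p div ?C, q div ?C) else 0)"
    unfolding Sub_def fk_def using p q enc_mix_entry[OF x bm k k cm] cp om bp by (simp add: pad_index bm)
  have "enc_state (es k) x $$ (p div ?C * ?C + p mod ?C, q div ?C * ?C + q mod ?C) = (if p mod ?C = q mod ?C then complex_of_real (pcond (es k) x (p mod ?C)) * omega (es k) x (p mod ?C) $$ (p div ?C, q div ?C) else 0)"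
    by (rule enc_entry[OF ves[OF k] x bp cp])
  then have R: "enc_state (es k) x $$ (p,q) = (if p mod ?C = q mod ?C then complex_of_real (pcond (es k) x (p mod ?C)) * omega (es k) x (p mod ?C) $$ (p div ?C, q div ?C) else 0)"
    by simp
  show "Sub k (enc_state E' x) $$ (p,q) = (complex_of_real (lam k) \<cdot>\<^sub>m enc_state (es k) x) $$ (p,q)"
    using L R p q enc_carrier[of "es k" x] by (simp add: nk_def)
qed (use enc_carrier[of "es k" x] in \<open>simp_all add: Sub_def nk_def\<close>)

lemma Rest_enc: assumes x: "x < n" and t: "t \<in> Rest"
  shows "enc_state E' x $$ (t,t) = 0"
proof -
  have rN: "t < Np" using t by (simp add: Rest_def)
  have KC: "K * Cm > 0" using rN unfolding Np_def by (cases "K * Cm") auto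
  have Cm0: "Cm > 0" using KC by simp
  define b where "b = t div (K * Cm)"
  define j where "j = t mod (K * Cm)"
  define k where "k = j div Cm"
  define c where "c = j mod Cm"
  have b: "b < Bm" using rN unfolding b_def Np_def by (simp add: less_mult_imp_div_less)
  have j: "j < K * Cm" using KC unfolding j_def by simp
  have k: "k < K" using j unfolding k_def by (simp add: less_mult_imp_div_less)
  have c: "c < Cm" using Cm0 unfolding c_def by simp
  have jkc: "j = k * Cm + c" unfolding k_def c_def by (metis div_mult_mod_eq)
  have rbj: "t = b * (K * Cm) + (k * Cm + c)" unfolding b_def jkc[symmetric] j_def by (metis div_mult_mod_eq)
  have e: "enc_state E' x $$ (t,t) = (if c < dimC (es k) then complex_of_real (lam k * pcond (es k) x c) * pad Bm (omega (es k) x c) $$ (b,b) else 0)"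
    unfolding rbj using enc_mix_entry[OF x b b k k c c] by simp
  show ?thesis
  proof (cases "c < dimC (es k)")
    case False then show ?thesis using e by simp
  next
    case True
    have "\<not> b < dimB (es k)"
    proof
      assume bB: "b < dimB (es k)"
      have i: "b * dimC (es k) + c < nk k" unfolding nk_def using decomp_lt[OF bB True] .
      have "fk k (b * dimC (es k) + c) = t" unfolding fk_def rbj using True by simp
      then have "t \<in> (\<Union>k<K. fk k ` {..<nk k})" using i k by blast
      then show False using t by (simp add: Rest_def)
    qed
    then have "pad Bm (omega (es k) x c) $$ (b,b) = 0"
      using valid_om[OF ves[OF k] x True] b by (simp add: pad_index)
    then show ?thesis using e by simp
  qed
qed

lemma Dmix_enc: assumes cp: "\<And>k. k < K \<Longrightarrow> cptp (nk k) d (Ds k)" and x: "x < n"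
  shows "Dmix d Ds (enc_state E' x) = msum d d (\<lambda>k. complex_of_real (lam k) \<cdot>\<^sub>m Ds k (enc_state (es k) x)) {..<K}"
proof -
  have z: "(\<Sum>i\<in>Rest. enc_state E' x $$ (i,i)) = 0" using Rest_enc[OF x] by simp
  have s: "\<And>k. k < K \<Longrightarrow> Ds k (Sub k (enc_state E' x)) = complex_of_real (lam k) \<cdot>\<^sub>m Ds k (enc_state (es k) x)"
  proof -
    fix k assume k: "k < K"
    have c: "enc_state (es k) x \<in> carrier_mat (nk k) (nk k)" unfolding nk_def by (rule enc_carrier)
    show "Ds k (Sub k (enc_state E' x)) = complex_of_real (lam k) \<cdot>\<^sub>m Ds k (enc_state (es k) x)"
      unfolding Sub_enc[OF k x] by (rule cptp_facts(3)[OF cp[OF k] c])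
  qed
  have "msum d d (\<lambda>k. Ds k (Sub k (enc_state E' x))) {..<K} = msum d d (\<lambda>k. complex_of_real (lam k) \<cdot>\<^sub>m Ds k (enc_state (es k) x)) {..<K}"
    unfolding msum_def by (rule cong_mat) (auto simp: s)
  moreover have "msum d d (\<lambda>k. Ds k (Sub k (enc_state E' x))) {..<K} + 0 \<cdot>\<^sub>m proj d 0 = msum d d (\<lambda>k. Ds k (Sub k (enc_state E' x))) {..<K}"
    by (rule eq_matI) auto
  ultimately show ?thesis unfolding Dmix_def z by simp
qed

lemma fid_mix: assumes cp: "\<And>k. k < K \<Longrightarrow> cptp (nk k) d (Ds k)" and phi: "\<And>x. x < n \<Longrightarrow> \<phi> x \<in> carrier_vec d"
  shows "(\<Sum>x<n. r x * Re (qform (Dmix d Ds (enc_state E' x)) (\<phi> x))) =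
    (\<Sum>k<K. lam k * (\<Sum>x<n. r x * Re (qform (Ds k (enc_state (es k) x)) (\<phi> x))))"
proof -
  have "(\<Sum>x<n. r x * Re (qform (Dmix d Ds (enc_state E' x)) (\<phi> x))) =
     (\<Sum>x<n. \<Sum>k<K. lam k * (r x * Re (qform (Ds k (enc_state (es k) x)) (\<phi> x))))"
  proof (rule sum.cong[OF refl])
    fix x assume "x \<in> {..<n}" then have x: "x < n" by simp
    have DC: "Ds k (enc_state (es k) x) \<in> carrier_mat d d" if k: "k < K" for k
    proof -
      have "enc_state (es k) x \<in> carrier_mat (nk k) (nk k)" unfolding nk_def by (rule enc_carrier)
      then show ?thesis by (rule cptp_facts(1)[OF cp[OF k]])
    qed
    have DE: "Dmix d Ds (enc_state E' x) = msum d d (\<lambda>k. complex_of_real (lam k) \<cdot>\<^sub>m Ds k (enc_state (es k) x)) {..<K}"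
      by (rule Dmix_enc[OF cp x])
    have "qform (Dmix d Ds (enc_state E' x)) (\<phi> x) = qform (msum d d (\<lambda>k. complex_of_real (lam k) \<cdot>\<^sub>m Ds k (enc_state (es k) x)) {..<K}) (\<phi> x)"
      by (simp only: DE)
    also have "\<dots> = (\<Sum>k<K. qform (complex_of_real (lam k) \<cdot>\<^sub>m Ds k (enc_state (es k) x)) (\<phi> x))"
      by (rule qform_msum[OF phi[OF x]])
    also have "\<dots> = (\<Sum>k<K. complex_of_real (lam k) * qform (Ds k (enc_state (es k) x)) (\<phi> x))"
      by (rule sum.cong[OF refl]) (use DC phi[OF x] in \<open>auto intro: qform_smult\<close>)
    finally show "r x * Re (qform (Dmix d Ds (enc_state E' x)) (\<phi> x)) = (\<Sum>k<K. lam k * (r x * Re (qform (Ds k (enc_state (es k) x)) (\<phi> x))))"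
      by (simp add: Re_sum sum_distrib_left ac_simps)
  qed
  also have "\<dots> = (\<Sum>k<K. lam k * (\<Sum>x<n. r x * Re (qform (Ds k (enc_state (es k) x)) (\<phi> x))))"
    by (subst sum.swap) (simp add: sum_distrib_left)
  finally show ?thesis .
qed

end

lemma ensemble_facts: assumes e: "ensemble d n r \<phi>"
  shows "n \<ge> 1" "d \<ge> 1" "\<And>x. x < n \<Longrightarrow> r x \<ge> 0" "(\<Sum>x<n. r x) = 1" "\<And>x. x < n \<Longrightarrow> \<phi> x \<in> carrier_vec d"
proof -
  show n: "n \<ge> 1" using e unfolding ensemble_def by (cases n) auto
  show "\<And>x. x < n \<Longrightarrow> r x \<ge> 0" "(\<Sum>x<n. r x) = 1" "\<And>x. x < n \<Longrightarrow> \<phi> x \<in> carrier_vec d"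
    using e unfolding ensemble_def by auto
  have "(\<Sum>i<d. (cmod (\<phi> 0 $ i))\<^sup>2) = 1" using e n unfolding ensemble_def by auto
  then show "d \<ge> 1" by (cases d) auto
qed

lemma combine:
  fixes K :: nat and lam eps Rs :: "nat \<Rightarrow> real" and es :: "nat \<Rightarrow> encoding" and d n :: nat
  assumes ens: "ensemble d n r \<phi>" and K: "K \<ge> 1" and lnn: "\<And>k. k < K \<Longrightarrow> lam k \<ge> 0" and ls: "(\<Sum>k<K. lam k) = 1"
    and ves: "\<And>k. k < K \<Longrightarrow> valid_encoding n (es k)"
    and cp: "\<And>k. k < K \<Longrightarrow> cptp (dimB (es k) * dimC (es k)) d (Ds k)"
    and good: "\<And>k. k < K \<Longrightarrow> lam k > 0 \<Longrightarrow> mutual_AC n r (es k) \<le> Rs k \<and>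
        (\<Sum>x<n. r x * Re (qform (Ds k (enc_state (es k) x)) (\<phi> x))) \<ge> 1 - eps k"
  shows "M_eps d n r \<phi> (\<Sum>k<K. lam k * eps k) (\<Sum>k<K. lam k * Rs k) \<le> ereal (\<Sum>k<K. lam k * cmi_AB_C n r (es k))"
proof -
  note EF = ensemble_facts[OF ens]
  interpret mixl n K r lam es
    by unfold_locales (use EF K lnn ls ves in auto)
  have cp': "\<And>k. k < K \<Longrightarrow> cptp (nk k) d (Ds k)" using cp by (simp add: nk_def)
  have mem: "mix K lam es \<in> T_eps d n r \<phi> (\<Sum>k<K. lam k * eps k) (\<Sum>k<K. lam k * Rs k)"
    unfolding T_eps_def
  proof (intro CollectI conjI exI)
    show "valid_encoding n (mix K lam es)" by (rule valid_mix)
    show "mutual_AC n r (mix K lam es) \<le> (\<Sum>k<K. lam k * Rs k)" unfolding mutual_mix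
    proof (rule sum_mono)
      fix k assume "k \<in> {..<K}" then have k: "k < K" by simp
      show "lam k * mutual_AC n r (es k) \<le> lam k * Rs k"
      proof (cases "lam k > 0")
        case True then show ?thesis using good[OF k True] by simp
      next
        case False then have "lam k = 0" using lnn[OF k] by simp
        then show ?thesis by simp
      qed
    qed
    show "cptp (dimB (mix K lam es) * dimC (mix K lam es)) d (Dmix d Ds)" unfolding Np_eq by (rule cptp_Dmix[OF EF(2) cp'])
    have "(\<Sum>k<K. lam k * (1 - eps k)) \<le> (\<Sum>k<K. lam k * (\<Sum>x<n. r x * Re (qform (Ds k (enc_state (es k) x)) (\<phi> x))))"
    proof (rule sum_mono)
      fix k assume "k \<in> {..<K}" then have k: "k < K" by simp
      show "lam k * (1 - eps k) \<le> lam k * (\<Sum>x<n. r x * Re (qform (Ds k (enc_state (es k) x)) (\<phi> x)))"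
      proof (cases "lam k > 0")
        case True then show ?thesis using good[OF k True] by simp
      next
        case False then have "lam k = 0" using lnn[OF k] by simp
        then show ?thesis by simp
      qed
    qed
    moreover have "(\<Sum>k<K. lam k * (1 - eps k)) = 1 - (\<Sum>k<K. lam k * eps k)"
      using ls by (simp add: right_diff_distrib sum_subtractf)
    moreover have F: "(\<Sum>x<n. r x * Re (qform (Dmix d Ds (enc_state (mix K lam es) x)) (\<phi> x))) =
      (\<Sum>k<K. lam k * (\<Sum>x<n. r x * Re (qform (Ds k (enc_state (es k) x)) (\<phi> x))))"
      by (rule fid_mix[OF cp' EF(5)])
    ultimately show "1 - (\<Sum>k<K. lam k * eps k) \<le> (\<Sum>x<n. r x * Re (qform (Dmix d Ds (enc_state (mix K lam es) x)) (\<phi> x)))"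
      by linarith
  qed
  then have "M_eps d n r \<phi> (\<Sum>k<K. lam k * eps k) (\<Sum>k<K. lam k * Rs k) \<le> ereal (cmi_AB_C n r (mix K lam es))"
    unfolding M_eps_def by (rule INF_lower)
  then show ?thesis using cmi_mix by simp
qed

theorem lemma3p1:
  fixes d n :: nat and r :: "nat \<Rightarrow> real" and \<phi> :: "nat \<Rightarrow> complex vec"
  assumes "ensemble d n r \<phi>"
  shows "(\<forall>\<epsilon> R1 R2. R1 \<le> R2 \<longrightarrow> M_eps d n r \<phi> \<epsilon> R2 \<le> M_eps d n r \<phi> \<epsilon> R1) \<and>
         (\<forall>(K::nat) (lam::nat \<Rightarrow> real) (eps::nat \<Rightarrow> real) (Rs::nat \<Rightarrow> real).
            (\<forall>k<K. eps k > 0 \<and> Rs k \<ge> 0 \<and> lam k \<ge> 0) \<and> (\<Sum>k<K. lam k) = 1 \<longrightarrow>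
            M_eps d n r \<phi> (\<Sum>k<K. lam k * eps k) (\<Sum>k<K. lam k * Rs k)
              \<le> (\<Sum>k<K. ereal (lam k) * M_eps d n r \<phi> (eps k) (Rs k)))"
proof (intro conjI allI impI)
  fix \<epsilon> R1 R2 :: real assume R: "R1 \<le> R2"
  then have "T_eps d n r \<phi> \<epsilon> R1 \<subseteq> T_eps d n r \<phi> \<epsilon> R2" unfolding T_eps_def by auto
  then show "M_eps d n r \<phi> \<epsilon> R2 \<le> M_eps d n r \<phi> \<epsilon> R1" unfolding M_eps_def
    by (rule INF_superset_mono) simp
next
  fix K :: nat and lam eps Rs :: "nat \<Rightarrow> real"
  assume H: "(\<forall>k<K. eps k > 0 \<and> Rs k \<ge> 0 \<and> lam k \<ge> 0) \<and> (\<Sum>k<K. lam k) = 1"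
  note ens = assms
  define L where "L = M_eps d n r \<phi> (\<Sum>k<K. lam k * eps k) (\<Sum>k<K. lam k * Rs k)"
  define Mk where "Mk k = M_eps d n r \<phi> (eps k) (Rs k)" for k
  define P where "P = {k. k < K \<and> lam k > 0}"
  have lnn: "\<And>k. k < K \<Longrightarrow> lam k \<ge> 0" using H by auto
  have ls: "(\<Sum>k<K. lam k) = 1" using H by auto
  have K1: "K \<ge> 1" using ls by (cases K) auto
  have PK: "P \<subseteq> {..<K}" unfolding P_def by auto
  have finP: "finite P" using PK finite_subset by blast
  have lsP: "(\<Sum>k\<in>P. lam k) = 1"
  proof -
    have "(\<Sum>k<K. lam k) = (\<Sum>k\<in>P. lam k)"
      by (rule sum.mono_neutral_right) (use PK lnn in \<open>fastforce simp: P_def less_le\<close>)+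
    then show ?thesis using ls by simp
  qed
  obtain j0 where j0: "j0 \<in> P"
  proof (cases "P = {}")
    case True then show ?thesis using lsP by simp
  next
    case False then show ?thesis using that by blast
  qed
  have j0K: "j0 < K" and j0l: "lam j0 > 0" using j0 by (auto simp: P_def)
  have SP: "(\<Sum>k<K. ereal (lam k) * Mk k) = (\<Sum>k\<in>P. ereal (lam k) * Mk k)"
    by (rule sum.mono_neutral_right) (use PK lnn in \<open>fastforce simp: P_def less_le zero_ereal_def[symmetric]\<close>)+
  have key: "L \<le> ereal (\<Sum>k\<in>P. lam k * t k)" if tk: "\<And>k. k \<in> P \<Longrightarrow> Mk k < ereal (t k)" for t
  proof -
    have "\<forall>k\<in>P. \<exists>e\<in>T_eps d n r \<phi> (eps k) (Rs k). ereal (cmi_AB_C n r e) < ereal (t k)"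
      using tk unfolding Mk_def M_eps_def INF_less_iff by blast
    then have ex: "\<forall>k\<in>P. \<exists>e. e \<in> T_eps d n r \<phi> (eps k) (Rs k) \<and> cmi_AB_C n r e < t k" by auto
    from bchoice[OF ex] obtain ec where ec': "\<forall>k\<in>P. ec k \<in> T_eps d n r \<phi> (eps k) (Rs k) \<and> cmi_AB_C n r (ec k) < t k"
      by blast
    then have ec: "\<And>k. k \<in> P \<Longrightarrow> ec k \<in> T_eps d n r \<phi> (eps k) (Rs k) \<and> cmi_AB_C n r (ec k) < t k" by blast
    define ks where "ks k = (if k \<in> P then k else j0)" for k
    define es where "es k = ec (ks k)" for k
    have ksP: "\<And>k. ks k \<in> P" unfolding ks_def using j0 by auto
    have esT: "\<And>k. es k \<in> T_eps d n r \<phi> (eps (ks k)) (Rs (ks k))" unfolding es_def using ec ksP by blast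
    have "\<forall>k. \<exists>D. cptp (dimB (es k) * dimC (es k)) d D \<and>
        (\<Sum>x<n. r x * Re (qform (D (enc_state (es k) x)) (\<phi> x))) \<ge> 1 - eps (ks k)"
      using esT unfolding T_eps_def by blast
    then obtain Ds where Ds: "\<And>k. cptp (dimB (es k) * dimC (es k)) d (Ds k) \<and>
        (\<Sum>x<n. r x * Re (qform (Ds k (enc_state (es k) x)) (\<phi> x))) \<ge> 1 - eps (ks k)"
      by metis
    have "L \<le> ereal (\<Sum>k<K. lam k * cmi_AB_C n r (es k))"
      unfolding L_def
    proof (rule combine[OF ens K1 lnn ls])
      show "\<And>k. k < K \<Longrightarrow> valid_encoding n (es k)" using esT unfolding T_eps_def by blast
      show "\<And>k. k < K \<Longrightarrow> cptp (dimB (es k) * dimC (es k)) d (Ds k)" using Ds by blast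
      fix k assume k: "k < K" and lk: "lam k > 0"
      then have kP: "k \<in> P" by (simp add: P_def)
      then have "ks k = k" by (simp add: ks_def)
      then show "mutual_AC n r (es k) \<le> Rs k \<and> (\<Sum>x<n. r x * Re (qform (Ds k (enc_state (es k) x)) (\<phi> x))) \<ge> 1 - eps k"
        using esT[of k] Ds[of k] unfolding T_eps_def by auto
    qed
    also have "(\<Sum>k<K. lam k * cmi_AB_C n r (es k)) = (\<Sum>k\<in>P. lam k * cmi_AB_C n r (es k))"
      by (rule sum.mono_neutral_right) (use PK lnn in \<open>fastforce simp: P_def less_le\<close>)+
    also have "\<dots> \<le> (\<Sum>k\<in>P. lam k * t k)"
    proof (rule sum_mono)
      fix k assume kP: "k \<in> P"
      then have "es k = ec k" by (simp add: es_def ks_def)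
      then have "cmi_AB_C n r (es k) < t k" using ec[OF kP] by simp
      moreover have "lam k > 0" using kP by (simp add: P_def)
      ultimately show "lam k * cmi_AB_C n r (es k) \<le> lam k * t k" by simp
    qed
    finally show ?thesis by simp
  qed
  show "M_eps d n r \<phi> (\<Sum>k<K. lam k * eps k) (\<Sum>k<K. lam k * Rs k)
          \<le> (\<Sum>k<K. ereal (lam k) * M_eps d n r \<phi> (eps k) (Rs k))"
    unfolding L_def[symmetric] Mk_def[symmetric] SP
  proof (cases "\<exists>k\<in>P. Mk k = \<infinity>")
    case True
    then obtain k where kP: "k \<in> P" and kinf: "Mk k = \<infinity>" by blast
    have "lam k > 0" using kP by (simp add: P_def)
    then have "ereal (lam k) * Mk k = \<infinity>" using kinf by simp
    then have "(\<Sum>k\<in>P. ereal (lam k) * Mk k) = \<infinity>" using kP finP by (subst sum_Pinfty) blast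
    then show "L \<le> (\<Sum>k\<in>P. ereal (lam k) * Mk k)" by simp
  next
    case False
    define m where "m k = real_of_ereal (Mk k)" for k
    show "L \<le> (\<Sum>k\<in>P. ereal (lam k) * Mk k)"
    proof (cases "\<exists>k\<in>P. Mk k = -\<infinity>")
      case True
      define G where "G = {k\<in>P. Mk k = -\<infinity>}"
      define F where "F = P - G"
      have finG: "finite G" and finF: "finite F" using finP by (auto simp: G_def F_def)
      have PFG: "P = F \<union> G" "F \<inter> G = {}" by (auto simp: F_def G_def)
      have Gne: "G \<noteq> {}" using True by (auto simp: G_def)
      have wpos: "(\<Sum>k\<in>G. lam k) > 0"
        by (rule sum_pos[OF finG Gne]) (auto simp: G_def P_def)
      have Ffin: "Mk k = ereal (m k)" if kF: "k \<in> F" for k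
      proof -
        have "Mk k \<noteq> \<infinity>" "Mk k \<noteq> -\<infinity>" using False kF by (auto simp: F_def G_def)
        then show ?thesis unfolding m_def by (cases "Mk k") auto
      qed
      have "L \<le> ereal B" for B
      proof -
        define c where "c = (\<Sum>k\<in>F. lam k * (m k + 1))"
        define w where "w = (\<Sum>k\<in>G. lam k)"
        define T0 where "T0 = (B - c) / w"
        define t where "t k = (if k \<in> G then T0 else m k + 1)" for k
        have "L \<le> ereal (\<Sum>k\<in>P. lam k * t k)"
        proof (rule key)
          fix k assume kP: "k \<in> P"
          show "Mk k < ereal (t k)"
          proof (cases "k \<in> G")
            case True then show ?thesis by (simp add: G_def t_def)
          next
            case False then have "k \<in> F" using kP by (simp add: F_def)
            then show ?thesis using Ffin False by (simp add: t_def)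
          qed
        qed
        also have "(\<Sum>k\<in>P. lam k * t k) = (\<Sum>k\<in>F. lam k * t k) + (\<Sum>k\<in>G. lam k * t k)"
          unfolding PFG(1) by (rule sum.union_disjoint[OF finF finG PFG(2)])
        also have "(\<Sum>k\<in>F. lam k * t k) = c" unfolding c_def t_def F_def by (rule sum.cong) auto
        also have "(\<Sum>k\<in>G. lam k * t k) = w * T0" unfolding w_def t_def by (simp add: sum_distrib_right)
        also have "c + w * T0 = B" using wpos unfolding T0_def w_def by simp
        finally show ?thesis .
      qed
      then have "L = -\<infinity>" by (rule ereal_bot)
      then show ?thesis by simp
    next
      case False2: False
      have fin: "Mk k = ereal (m k)" if kP: "k \<in> P" for k
      proof -
        have "Mk k \<noteq> \<infinity>" "Mk k \<noteq> -\<infinity>" using False False2 kP by auto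
        then show ?thesis unfolding m_def by (cases "Mk k") auto
      qed
      have S: "(\<Sum>k\<in>P. ereal (lam k) * Mk k) = ereal (\<Sum>k\<in>P. lam k * m k)"
        by (simp add: fin)
      show ?thesis unfolding S
      proof (rule ereal_le_epsilon2)
        fix e :: real assume e: "0 < e"
        have "L \<le> ereal (\<Sum>k\<in>P. lam k * (m k + e))"
          by (rule key) (simp add: fin e)
        also have "(\<Sum>k\<in>P. lam k * (m k + e)) = (\<Sum>k\<in>P. lam k * m k) + e"
          using lsP by (simp add: distrib_left sum.distrib flip: sum_distrib_right)
        finally show "L \<le> ereal (\<Sum>k\<in>P. lam k * m k) + ereal e" by simp
      qed
    qed
  qed
qed

end
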